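(* Let $x\in\mathbb{R}$ and let $f:\mathbb{R}\to\mathbb{R}$ be analytic and nonzero on the interval $[0,x]$, with $f(0)=1$, and let $r>1$. For each nonempty finite set $\mathcal{S}\subset\mathbb{N}^*$ of positive integers define, for integers $n\ge |\mathcal{S}|$, \[ x_n(\mathcal{S},r,x)=\Big[\prod_{k\in\mathcal{S}}(r^k-1)^{1/k}\Big]\cdot\frac{x}{r^n}, \qquad \mathcal{P}_f(\mathcal{S},r,x)=\prod_{n=|\mathcal{S}|}^{\infty}\Big[f\big(x_n(\mathcal{S},r,x)\big)\Big]^{\binom{n-1}{|\mathcal{S}|-1}} . \] Then \[ f(x)=\lim_{r\downarrow 1}\ \frac{\prod_{|\mathcal{S}|\ \text{odd}}\mathcal{P}_f(\mathcal{S},r,x)}{\prod_{|\mathcal{S}|\ \text{even}}\mathcal{P}_f(\mathcal{S},r,x)}, \] where the product in the numerator runs over all nonempty finite subsets $\mathcal{S}\subset\mathbb{N}^*$ with an odd number of elements and the product in the denominator over all finite subsets $\mathcal{S}\subset\mathbb{N}^*$ with a (positive) even number of elements.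
   Context: $\mathbb{N}^*$ denotes the set of positive integers and $|\mathcal{S}|$ the cardinality of $\mathcal{S}$. *)

theory Defs
  imports "HOL-Analysis.Analysis"
begin

definition real_analytic_at :: "(real \<Rightarrow> real) \<Rightarrow> real \<Rightarrow> bool" where
  "real_analytic_at f y \<longleftrightarrow>
     (\<exists>\<delta>>0. \<exists>a::nat \<Rightarrow> real. \<forall>z. \<bar>z - y\<bar> < \<delta> \<longrightarrow> (\<lambda>k. a k * (z - y) ^ k) sums f z)"

definition real_analytic_on :: "(real \<Rightarrow> real) \<Rightarrow> real set \<Rightarrow> bool" where
  "real_analytic_on f A \<longleftrightarrow> (\<forall>y\<in>A. real_analytic_at f y)"

definition xn :: "nat set \<Rightarrow> real \<Rightarrow> real \<Rightarrow> nat \<Rightarrow> real" where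
  "xn S r x n = (\<Prod>k\<in>S. (r ^ k - 1) powr (1 / real k)) * x / r ^ n"

definition Pf :: "(real \<Rightarrow> real) \<Rightarrow> nat set \<Rightarrow> real \<Rightarrow> real \<Rightarrow> real" where
  "Pf f S r x = (\<Prod>i. f (xn S r x (i + card S)) ^ ((i + card S - 1) choose (card S - 1)))"

text \<open>Truncated ratio: sets S restricted to subsets of {1..N}.\<close>
definition ratioN :: "(real \<Rightarrow> real) \<Rightarrow> nat \<Rightarrow> real \<Rightarrow> real \<Rightarrow> real" where
  "ratioN f N r x =
     (\<Prod>S\<in>{S. S \<subseteq> {1..N} \<and> S \<noteq> {} \<and> odd (card S)}. Pf f S r x) /
     (\<Prod>S\<in>{S. S \<subseteq> {1..N} \<and> S \<noteq> {} \<and> even (card S)}. Pf f S r x)"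

end

theory Submission
  imports Defs "HOL-Complex_Analysis.Complex_Analysis"
begin
lemma choose_swap: "(a + b) choose b = (a + b) choose (a::nat)"
  by (metis binomial_symmetric add_diff_cancel_right' le_add2)

lemma binom_geom_summable:
  fixes q :: real
  assumes "0 \<le> q" "q < 1"
  shows "summable (\<lambda>i. real ((i + s) choose s) * q ^ i)"
proof (induction s)
  case 0
  then show ?case using assms by (simp add: summable_geometric)
next
  case (Suc s)
  have g: "summable (\<lambda>k. norm (q ^ k))" using assms by (simp add: summable_geometric)
  have a: "summable (\<lambda>k. norm (real ((k + s) choose s) * q ^ k))"
    using Suc assms by simp
  have "summable (\<lambda>k. \<Sum>i\<le>k. (real ((i + s) choose s) * q ^ i) * q ^ (k - i))"
    by (rule summable_Cauchy_product[OF a g])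
  moreover have "(\<Sum>i\<le>k. (real ((i + s) choose s) * q ^ i) * q ^ (k - i)) = real ((k + Suc s) choose Suc s) * q ^ k" for k
  proof -
    have "(\<Sum>i\<le>k. (real ((i + s) choose s) * q ^ i) * q ^ (k - i)) = (\<Sum>i\<le>k. real ((s + i) choose i)) * q ^ k"
      unfolding sum_distrib_right
    proof (rule sum.cong[OF refl])
      fix i assume "i \<in> {..k}"
      then have "q ^ i * q ^ (k - i) = q ^ k" by (simp add: power_add[symmetric])
      then show "real ((i + s) choose s) * q ^ i * q ^ (k - i) = real ((s + i) choose i) * q ^ k"
        by (simp add: mult.assoc choose_swap add.commute)
    qed
    also have "(\<Sum>i\<le>k. real ((s + i) choose i)) = real (Suc (s + k) choose k)"
      by (subst of_nat_sum[symmetric]) (simp add: sum_choose_lower)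
    also have "Suc (s + k) choose k = (k + Suc s) choose Suc s"
      by (metis add_Suc_right add_diff_cancel_left' binomial_symmetric le_add1 add.commute)
    finally show ?thesis .
  qed
  ultimately show ?case by simp
qed

lemma choose_le_sum: "(i + t) choose t \<le> (n + Suc t) choose Suc t" if "i \<le> n" for i t n :: nat
proof -
  have "(i + t) choose t = (t + i) choose i" by (metis choose_swap add.commute)
  also have "\<dots> \<le> (\<Sum>k\<le>n. (t + k) choose k)"
    using that by (intro member_le_sum) auto
  also have "\<dots> = Suc (t + n) choose n" by (rule sum_choose_lower)
  also have "\<dots> = (n + Suc t) choose Suc t"
    by (metis add_Suc_right add.commute choose_swap)
  finally show ?thesis .
qed

lemma sum_choose_le: "(\<Sum>i\<le>n. (i + t) choose t) = (n + Suc t) choose Suc t"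
proof -
  have "(\<Sum>i\<le>n. (i + t) choose t) = (\<Sum>i\<le>n. (t + i) choose i)"
    by (intro sum.cong) (auto simp: choose_swap add.commute)
  also have "\<dots> = Suc (t + n) choose n" by (rule sum_choose_lower)
  also have "\<dots> = (n + Suc t) choose Suc t"
    by (metis add_Suc_right add.commute choose_swap)
  finally show ?thesis .
qed

lemma double_sum:
  fixes G :: "nat \<Rightarrow> complex"
  assumes sG: "summable (\<lambda>n. real ((n + Suc t) choose Suc t) * norm (G n))"
  shows "(\<lambda>j. \<Sum>i. of_nat ((i + t) choose t) * G (i + j)) sums (\<Sum>n. of_nat ((n + Suc t) choose Suc t) * G n)"
    and "\<And>j. summable (\<lambda>i. of_nat ((i + t) choose t) * G (i + j))"
proof -
  define T where "T = (\<lambda>(n,i). of_nat ((i + t) choose t) * G n)"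
  define Sig where "Sig = Sigma (UNIV::nat set) (\<lambda>n. {..n})"
  have fib: "((\<lambda>i. T (n,i)) has_sum (of_nat ((n + Suc t) choose Suc t) * G n)) {..n}" for n
  proof -
    have "((\<lambda>i. T (n,i)) has_sum (\<Sum>i\<le>n. T (n,i))) {..n}" by (rule has_sum_finite) auto
    moreover have "(\<Sum>i\<le>n. T (n,i)) = of_nat ((n + Suc t) choose Suc t) * G n"
      unfolding T_def by (simp add: sum_distrib_right[symmetric] sum_choose_le flip: of_nat_sum)
    ultimately show ?thesis by simp
  qed
  have absT: "(\<lambda>x. norm (T x)) summable_on Sig"
    unfolding Sig_def Infinite_Sum.abs_summable_on_Sigma_iff
  proof (intro conjI ballI)
    fix n :: nat show "(\<lambda>y. norm (T (n, y))) summable_on {..n}" by (rule summable_on_finite) auto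
  next
    have eq: "infsum (\<lambda>y. norm (T (n, y))) {..n} = real ((n + Suc t) choose Suc t) * norm (G n)" for n
    proof -
      have "infsum (\<lambda>y. norm (T (n, y))) {..n} = (\<Sum>y\<le>n. norm (T (n, y)))" by (rule infsum_finite) auto
      also have "\<dots> = real ((n + Suc t) choose Suc t) * norm (G n)"
        unfolding T_def by (simp add: norm_mult sum_distrib_right[symmetric] sum_choose_le flip: of_nat_sum)
      finally show ?thesis .
    qed
    show "(\<lambda>x. norm (\<Sum>\<^sub>\<infinity>y\<in>{..x}. norm (T (x, y)))) summable_on UNIV"
      unfolding eq using sG
      by (subst summable_on_UNIV_nonneg_real_iff) auto
  qed
  then have "T summable_on Sig" by (rule abs_summable_summable)
  then have hs: "(T has_sum infsum T Sig) Sig" by (rule has_sum_infsum)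
  have h1: "((\<lambda>n. of_nat ((n + Suc t) choose Suc t) * G n) has_sum infsum T Sig) UNIV"
  proof -
    have hs2: "(T has_sum infsum T Sig) (Sigma UNIV (\<lambda>n. {..n}))" using hs by (simp add: Sig_def)
    show ?thesis by (rule has_sum_Sigma'[OF hs2 fib])
  qed
  then have X: "infsum T Sig = (\<Sum>n. of_nat ((n + Suc t) choose Suc t) * G n)"
    using has_sum_imp_sums sums_unique by blast
  define T' where "T' = (\<lambda>(j,i). of_nat ((i + t) choose t) * G (i + j))"
  have hs': "(T' has_sum infsum T Sig) (Sigma UNIV (\<lambda>_. UNIV))"
  proof -
    have "(T' has_sum infsum T Sig) (UNIV \<times> UNIV) = (T has_sum infsum T Sig) Sig"
      by (rule has_sum_reindex_bij_witness[where j="\<lambda>(j,i). (i+j, i)" and i="\<lambda>(n,i). (n-i, i)"])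
         (auto simp: Sig_def T_def T'_def)
    with hs show ?thesis by simp
  qed
  show sm: "summable (\<lambda>i. of_nat ((i + t) choose t) * G (i + j))" for j
  proof (rule summable_norm_cancel, rule summable_comparison_test')
    show "summable (\<lambda>i. real ((i + j + Suc t) choose Suc t) * norm (G (i + j)))"
      using summable_ignore_initial_segment[OF sG, of j] by simp
    fix i
    show "norm (norm (of_nat ((i + t) choose t) * G (i + j))) \<le> real ((i + j + Suc t) choose Suc t) * norm (G (i + j))"
    proof -
      have "real ((i + t) choose t) \<le> real ((i + j + Suc t) choose Suc t)"
        using choose_le_sum[of i "i+j" t] by (simp only: of_nat_le_iff)
      then show ?thesis by (simp add: norm_mult mult_right_mono del: binomial_Suc_Suc)
    qed
  qed
  have fib': "((\<lambda>i. T' (j,i)) has_sum (\<Sum>i. of_nat ((i + t) choose t) * G (i + j))) UNIV" for j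
  proof -
    have "summable (\<lambda>i. norm (of_nat ((i + t) choose t) * G (i + j)))"
    proof (rule summable_comparison_test')
      show "summable (\<lambda>i. real ((i + j + Suc t) choose Suc t) * norm (G (i + j)))"
        using summable_ignore_initial_segment[OF sG, of j] by simp
      fix i
      show "norm (norm (of_nat ((i + t) choose t) * G (i + j))) \<le> real ((i + j + Suc t) choose Suc t) * norm (G (i + j))"
    proof -
      have "real ((i + t) choose t) \<le> real ((i + j + Suc t) choose Suc t)"
        using choose_le_sum[of i "i+j" t] by (simp only: of_nat_le_iff)
      then show ?thesis by (simp add: norm_mult mult_right_mono del: binomial_Suc_Suc)
    qed
    qed
    then show ?thesis unfolding T'_def
      by (intro norm_summable_imp_has_sum) (auto intro: summable_sums sm)
  qed
  have "((\<lambda>j. \<Sum>i. of_nat ((i + t) choose t) * G (i + j)) has_sum infsum T Sig) UNIV"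
    by (rule has_sum_Sigma'[OF hs' fib'])
  then show "(\<lambda>j. \<Sum>i. of_nat ((i + t) choose t) * G (i + j)) sums (\<Sum>n. of_nat ((n + Suc t) choose Suc t) * G n)"
    using X has_sum_imp_sums by metis
qed

definition bk :: "real \<Rightarrow> nat \<Rightarrow> real" where "bk r k = (r ^ k - 1) powr (1 / real k) / r"
definition BS :: "real \<Rightarrow> nat set \<Rightarrow> real" where "BS r S = (\<Prod>k\<in>S. bk r k)"
definition Qs :: "real \<Rightarrow> (complex \<Rightarrow> complex) \<Rightarrow> nat set \<Rightarrow> complex \<Rightarrow> complex" where
  "Qs r h S z = (if S = {} then h z else
     (\<Sum>i. of_nat ((i + card S - 1) choose (card S - 1)) * h (z * of_real (BS r S / r ^ i))))"
definition Hs :: "real \<Rightarrow> nat \<Rightarrow> (complex \<Rightarrow> complex) \<Rightarrow> complex \<Rightarrow> complex" where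
  "Hs r N h z = (\<Sum>S\<in>Pow {1..N}. (-1) ^ card S * Qs r h S z)"
definition ray :: "(complex \<Rightarrow> complex) \<Rightarrow> complex \<Rightarrow> real \<Rightarrow> bool" where
  "ray h z C \<longleftrightarrow> (\<forall>t. 0 < t \<and> t \<le> 1 \<longrightarrow> cmod (h (z * of_real t)) \<le> C * t)"

lemma bk_pow: assumes "r > 1" "k \<ge> 1" shows "bk r k ^ k = 1 - 1 / r ^ k"
proof -
  have pos: "r ^ k - 1 > 0" using assms by (simp add: one_less_power)
  have "((r ^ k - 1) powr (1 / real k)) ^ k = ((r ^ k - 1) powr (1 / real k)) powr (real k)"
    using pos by (simp add: powr_realpow)
  also have "\<dots> = (r ^ k - 1) powr (1 / real k * real k)" by (simp add: powr_powr)
  also have "\<dots> = r ^ k - 1" using pos assms by simp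
  finally have "((r ^ k - 1) powr (1 / real k)) ^ k = r ^ k - 1" .
  then show ?thesis using assms by (simp add: bk_def power_divide field_simps)
qed

lemma bk_pos: assumes "r > 1" "k \<ge> 1" shows "bk r k > 0"
proof -
  have "r ^ k - 1 > 0" using assms by (simp add: one_less_power)
  then have "(r ^ k - 1) powr (1 / real k) > 0" by simp
  then show ?thesis using assms unfolding bk_def by (simp add: divide_pos_pos)
qed

lemma bk_le1: assumes "r > 1" "k \<ge> 1" shows "bk r k \<le> 1"
proof (rule ccontr)
  assume "\<not> bk r k \<le> 1"
  then have "1 < bk r k" by simp
  then have "1 < bk r k ^ k" using assms(2) by (intro one_less_power) auto
  moreover have "r ^ k > 0" using assms by simp
  then have "1 / r ^ k > 0" by simp
  ultimately show False using bk_pow[OF assms] by linarith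
qed

lemma bk_close: assumes "r > 1" "k \<ge> 1" shows "1 - bk r k \<le> 1 / r ^ k"
proof -
  have "bk r k ^ k \<le> bk r k ^ 1"
    using assms bk_pos[OF assms] bk_le1[OF assms] by (intro power_decreasing) auto
  then show ?thesis using bk_pow[OF assms] by simp
qed

lemma BS_pos: assumes "r > 1" "0 \<notin> S" shows "BS r S > 0"
  unfolding BS_def using bk_pos[OF assms(1)] assms(2) by (intro prod_pos) (metis less_one not_le)

lemma BS_le1: assumes "r > 1" "0 \<notin> S" shows "BS r S \<le> 1"
  unfolding BS_def
proof (intro prod_le_1 conjI)
  fix x assume "x \<in> S"
  then have "x \<ge> 1" using assms(2) by (metis less_one not_le)
  then show "0 \<le> bk r x" "bk r x \<le> 1" using bk_pos[OF assms(1)] bk_le1[OF assms(1)] less_imp_le by auto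
qed

lemma ray_summable:
  assumes "ray h z C" "r > 1" "0 < B" "B \<le> 1"
  shows "summable (\<lambda>i. real ((i + s) choose s) * norm (h (z * of_real (B / r ^ i))))"
proof (rule summable_comparison_test')
  show "summable (\<lambda>i. (C * B) * (real ((i + s) choose s) * (1 / r) ^ i))"
    using assms by (intro summable_mult binom_geom_summable) auto
  fix i
  have "B / r ^ i \<le> 1" using assms by (simp add: field_simps one_le_power order_trans[OF assms(4)])
  moreover have "0 < B / r ^ i" using assms by simp
  ultimately have "cmod (h (z * of_real (B / r ^ i))) \<le> C * (B / r ^ i)"
    using assms(1) unfolding ray_def by blast
  then have "real ((i + s) choose s) * norm (h (z * of_real (B / r ^ i))) \<le> real ((i + s) choose s) * (C * (B / r ^ i))"
    by (intro mult_left_mono) auto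
  then show "norm (real ((i + s) choose s) * norm (h (z * of_real (B / r ^ i)))) \<le> (C * B) * (real ((i + s) choose s) * (1 / r) ^ i)"
    by (simp add: power_one_over field_simps)
qed

lemma Qs_insert:
  assumes "ray h z C" "r > 1" "finite S" "0 \<notin> S" "m \<ge> 1" "m \<notin> S"
  shows "(\<lambda>j. Qs r h S (z * of_real (bk r m / r ^ j))) sums Qs r h (insert m S) z"
proof (cases "S = {}")
  case True
  have b: "0 < bk r m" "bk r m \<le> 1" using bk_pos[OF assms(2,5)] bk_le1[OF assms(2,5)] by auto
  have "summable (\<lambda>i. real ((i + 0) choose 0) * norm (h (z * of_real (bk r m / r ^ i))))"
    by (rule ray_summable[OF assms(1,2) b])
  then have "summable (\<lambda>i. norm (h (z * of_real (bk r m / r ^ i))))" by simp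
  then have "summable (\<lambda>i. h (z * of_real (bk r m / r ^ i)))"
    by (rule summable_norm_cancel)
  then show ?thesis using True by (simp add: Qs_def BS_def summable_sums)
next
  case False
  then obtain t where t: "card S = Suc t" using assms(3) by (metis card_0_eq not0_implies_Suc)
  define B where "B = BS r S"
  define b where "b = bk r m"
  have B: "0 < B" "B \<le> 1" using BS_pos BS_le1 assms by (auto simp: B_def)
  have b: "0 < b" "b \<le> 1" using bk_pos[OF assms(2,5)] bk_le1[OF assms(2,5)] by (auto simp: b_def)
  define G where "G = (\<lambda>n. h (z * of_real (b * B / r ^ n)))"
  have sG: "summable (\<lambda>n. real ((n + Suc t) choose Suc t) * norm (G n))"
    unfolding G_def using B b by (intro ray_summable[OF assms(1,2)]) (auto simp: mult_le_one)
  have eq1: "Qs r h S (z * of_real (b / r ^ j)) = (\<Sum>i. of_nat ((i + t) choose t) * G (i + j))" for j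
  proof -
    have "z * of_real (b / r ^ j) * of_real (B / r ^ i) = z * of_real (b * B / r ^ (i + j))" for i
      by (simp add: power_add field_simps)
    then show ?thesis using False t by (simp add: Qs_def G_def B_def)
  qed
  have eq2: "Qs r h (insert m S) z = (\<Sum>n. of_nat ((n + Suc t) choose Suc t) * G n)"
  proof -
    have "card (insert m S) = Suc (Suc t)" using t assms by simp
    moreover have "BS r (insert m S) = b * B" using assms by (simp add: BS_def B_def b_def)
    ultimately show ?thesis by (simp add: Qs_def G_def)
  qed
  show ?thesis unfolding eq2 b_def[symmetric] eq1 by (rule double_sum(1)[OF sG])
qed

lemma Hs_rec:
  assumes "ray h z C" "r > 1"
  shows "(\<lambda>j. Hs r N h (z * of_real (bk r (Suc N) / r ^ j))) sums (Hs r N h z - Hs r (Suc N) h z)"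
proof -
  have pw: "Pow {1..Suc N} = Pow {1..N} \<union> insert (Suc N) ` Pow {1..N}"
    by (simp add: atLeastAtMostSuc_conv Pow_insert)
  have disj: "Pow {1..N} \<inter> insert (Suc N) ` Pow {1..N} = {}" by auto
  have inj: "inj_on (insert (Suc N)) (Pow {1..N})"
    by (rule inj_onI) (metis Pow_iff atLeastAtMost_iff insert_ident not_less_eq_eq order_refl subset_iff)
  have "Hs r (Suc N) h z = Hs r N h z + (\<Sum>S\<in>Pow {1..N}. (-1) ^ card (insert (Suc N) S) * Qs r h (insert (Suc N) S) z)"
  proof -
    have "Hs r (Suc N) h z = Hs r N h z + (\<Sum>S\<in>insert (Suc N) ` Pow {1..N}. (-1) ^ card S * Qs r h S z)"
      unfolding Hs_def pw by (rule sum.union_disjoint) (auto simp: disj)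
    moreover have "(\<Sum>S\<in>insert (Suc N) ` Pow {1..N}. (-1) ^ card S * Qs r h S z) = (\<Sum>S\<in>Pow {1..N}. (-1) ^ card (insert (Suc N) S) * Qs r h (insert (Suc N) S) z)"
      by (rule sum.reindex_cong[OF inj]) auto
    ultimately show ?thesis by simp
  qed
  also have "(\<Sum>S\<in>Pow {1..N}. (-1) ^ card (insert (Suc N) S) * Qs r h (insert (Suc N) S) z)
       = - (\<Sum>S\<in>Pow {1..N}. (-1) ^ card S * Qs r h (insert (Suc N) S) z)"
  proof -
    have "(-1) ^ card (insert (Suc N) S) * Qs r h (insert (Suc N) S) z = - ((-1) ^ card S * Qs r h (insert (Suc N) S) z)"
      if "S \<in> Pow {1..N}" for S
    proof -
      have "finite S" "Suc N \<notin> S" using that finite_subset by auto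
      then show ?thesis by simp
    qed
    then show ?thesis by (simp add: sum_negf)
  qed
  finally have e: "Hs r N h z - Hs r (Suc N) h z = (\<Sum>S\<in>Pow {1..N}. (-1) ^ card S * Qs r h (insert (Suc N) S) z)"
    by simp
  have each: "(\<lambda>j. Qs r h S (z * of_real (bk r (Suc N) / r ^ j))) sums Qs r h (insert (Suc N) S) z"
    if "S \<in> Pow {1..N}" for S
  proof -
    have "finite S" "0 \<notin> S" "Suc N \<notin> S" using that finite_subset by auto
    then show ?thesis by (intro Qs_insert[OF assms]) auto
  qed
  have "(\<lambda>j. \<Sum>S\<in>Pow {1..N}. (-1) ^ card S * Qs r h S (z * of_real (bk r (Suc N) / r ^ j)))
      sums (\<Sum>S\<in>Pow {1..N}. (-1) ^ card S * Qs r h (insert (Suc N) S) z)"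
    by (rule sums_sum) (rule sums_mult, erule each)
  then show ?thesis unfolding e by (simp only: Hs_def)
qed

definition Mop :: "real \<Rightarrow> nat \<Rightarrow> real \<Rightarrow> (complex \<Rightarrow> complex) \<Rightarrow> complex \<Rightarrow> complex" where
  "Mop r K b \<Psi> z = \<Psi> z - (\<Sum>j. of_real ((b / r ^ j) ^ Suc K) * \<Psi> (z * of_real (b / r ^ j)))"

fun Psi :: "real \<Rightarrow> nat \<Rightarrow> (complex \<Rightarrow> complex) \<Rightarrow> nat \<Rightarrow> complex \<Rightarrow> complex" where
  "Psi r K \<psi> 0 = \<psi>"
| "Psi r K \<psi> (Suc N) = Mop r K (bk r (Suc N)) (Psi r K \<psi> N)"

definition sig :: "real \<Rightarrow> nat \<Rightarrow> real" where "sig r m = 1 / (1 - 1 / r ^ m)"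
definition Lam :: "real \<Rightarrow> nat \<Rightarrow> nat \<Rightarrow> real" where
  "Lam r N m = (\<Prod>k\<in>{1..N}. 1 - bk r k ^ m * sig r m)"

definition dil :: "complex set \<Rightarrow> bool" where
  "dil D \<longleftrightarrow> (\<forall>z\<in>D. \<forall>t. 0 \<le> t \<and> t \<le> 1 \<longrightarrow> z * of_real t \<in> D)"

lemma geom_c: assumes "r > 1" "m \<ge> 1"
  shows "(\<lambda>j. (b / r ^ j) ^ m) sums (b ^ m * sig r m)"
proof -
  have q: "norm (1 / r ^ m) < 1" using assms by (simp add: one_less_power)
  have "(\<lambda>j. (1 / r ^ m) ^ j) sums (1 / (1 - 1 / r ^ m))" by (rule geometric_sums[OF q])
  then have "(\<lambda>j. b ^ m * (1 / r ^ m) ^ j) sums (b ^ m * (1 / (1 - 1 / r ^ m)))" by (rule sums_mult)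
  moreover have "b ^ m * (1 / r ^ m) ^ j = (b / r ^ j) ^ m" for j
    by (simp add: power_divide power_mult[symmetric] mult.commute)
  ultimately show ?thesis by (simp add: sig_def)
qed

lemma sig_pos: assumes "r > 1" "m \<ge> 1" shows "sig r m > 0"
proof -
  have "1 < r ^ m" using assms by (simp add: one_less_power)
  then have "1 / r ^ m < 1" by simp
  then show ?thesis by (simp add: sig_def)
qed

lemma Mop_bound:
  assumes D: "dil D" and M: "\<And>w. w \<in> D \<Longrightarrow> cmod (\<Psi> w) \<le> M" and r: "r > 1"
    and b: "0 < b" "b \<le> 1" and z: "z \<in> D"
  shows "summable (\<lambda>j. of_real ((b / r ^ j) ^ Suc K) * \<Psi> (z * of_real (b / r ^ j)))"
    and "cmod (\<Sum>j. of_real ((b / r ^ j) ^ Suc K) * \<Psi> (z * of_real (b / r ^ j))) \<le> sig r (Suc K) * M"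
    and "cmod (Mop r K b \<Psi> z) \<le> (1 + sig r (Suc K)) * M"
proof -
  have M0: "0 \<le> M" using M z by (meson norm_ge_zero order_trans)
  have cj: "0 < b / r ^ j" "b / r ^ j \<le> 1" for j
    using b r by (auto simp: field_simps intro: order_trans[OF _ one_le_power])
  have inD: "z * of_real (b / r ^ j) \<in> D" for j using D z cj unfolding dil_def by (meson less_imp_le)
  have g: "(\<lambda>j. (b / r ^ j) ^ Suc K) sums (b ^ Suc K * sig r (Suc K))" by (rule geom_c[OF r]) simp
  have g1: "(\<lambda>j. (b / r ^ j) ^ Suc K * M) sums (b ^ Suc K * sig r (Suc K) * M)"
    by (rule sums_mult2[OF g])
  have nb: "norm (of_real ((b / r ^ j) ^ Suc K) * \<Psi> (z * of_real (b / r ^ j))) \<le> (b / r ^ j) ^ Suc K * M" for j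
  proof -
    have "norm (of_real ((b / r ^ j) ^ Suc K) * \<Psi> (z * of_real (b / r ^ j))) = (b / r ^ j) ^ Suc K * cmod (\<Psi> (z * of_real (b / r ^ j)))"
      using cj[of j] by (simp only: norm_mult norm_of_real abs_of_nonneg zero_le_power less_imp_le)
    also have "\<dots> \<le> (b / r ^ j) ^ Suc K * M"
    proof (rule mult_left_mono)
      show "0 \<le> (b / r ^ j) ^ Suc K" using cj[of j] by (simp only: zero_le_power less_imp_le)
    qed (use M[OF inD[of j]] in auto)
    finally show ?thesis .
  qed
  have sn: "summable (\<lambda>j. norm (of_real ((b / r ^ j) ^ Suc K) * \<Psi> (z * of_real (b / r ^ j))))"
    by (rule summable_comparison_test'[OF sums_summable[OF g1]]) (simp only: norm_ge_zero real_norm_def abs_of_nonneg nb)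
  then show s: "summable (\<lambda>j. of_real ((b / r ^ j) ^ Suc K) * \<Psi> (z * of_real (b / r ^ j)))"
    by (rule summable_norm_cancel)
  have "cmod (\<Sum>j. of_real ((b / r ^ j) ^ Suc K) * \<Psi> (z * of_real (b / r ^ j)))
      \<le> (\<Sum>j. norm (of_real ((b / r ^ j) ^ Suc K) * \<Psi> (z * of_real (b / r ^ j))))"
    by (rule summable_norm[OF sn])
  also have "\<dots> \<le> (\<Sum>j. (b / r ^ j) ^ Suc K * M)"
    by (rule suminf_le[OF nb sn sums_summable[OF g1]])
  also have "\<dots> = b ^ Suc K * sig r (Suc K) * M" using g1 by (simp add: sums_iff)
  also have "\<dots> \<le> sig r (Suc K) * M"
  proof -
    have "b ^ Suc K \<le> 1" using b by (intro power_le_one) auto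
    then have "b ^ Suc K * (sig r (Suc K) * M) \<le> 1 * (sig r (Suc K) * M)"
      using sig_pos[OF r, of "Suc K"] M0 by (intro mult_right_mono) auto
    then show ?thesis by (simp only: mult.assoc mult_1)
  qed
  finally show bnd: "cmod (\<Sum>j. of_real ((b / r ^ j) ^ Suc K) * \<Psi> (z * of_real (b / r ^ j))) \<le> sig r (Suc K) * M" .
  have "cmod (Mop r K b \<Psi> z) \<le> cmod (\<Psi> z) + cmod (\<Sum>j. of_real ((b / r ^ j) ^ Suc K) * \<Psi> (z * of_real (b / r ^ j)))"
    unfolding Mop_def by (rule norm_triangle_ineq4)
  also have "\<dots> \<le> M + sig r (Suc K) * M" using M[OF z] bnd by simp
  finally show "cmod (Mop r K b \<Psi> z) \<le> (1 + sig r (Suc K)) * M" by (simp add: algebra_simps)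
qed

lemma Psi_bounded:
  assumes D: "dil D" and M: "\<And>w. w \<in> D \<Longrightarrow> cmod (\<psi> w) \<le> M" and r: "r > 1"
  shows "\<exists>M'. \<forall>w\<in>D. cmod (Psi r K \<psi> N w) \<le> M'"
proof (induction N)
  case 0 then show ?case using M by auto
next
  case (Suc N)
  then obtain M' where M': "\<And>w. w \<in> D \<Longrightarrow> cmod (Psi r K \<psi> N w) \<le> M'" by blast
  have "cmod (Psi r K \<psi> (Suc N) w) \<le> (1 + sig r (Suc K)) * M'" if "w \<in> D" for w
    using Mop_bound(3)[OF D M' r bk_pos[OF r] bk_le1[OF r] that] by simp
  then show ?case by blast
qed

lemma Lam_Suc: "Lam r (Suc N) m = Lam r N m * (1 - bk r (Suc N) ^ m * sig r m)"
proof -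
  have "{1..Suc N} = insert (Suc N) {1..N}" by auto
  then show ?thesis by (simp add: Lam_def mult.commute)
qed

lemma Lam_zero: assumes "r > 1" "1 \<le> m" "m \<le> N" shows "Lam r N m = 0"
proof -
  have "1 < r ^ m" using assms by (simp add: one_less_power)
  then have ne: "1 - 1 / r ^ m \<noteq> 0" by simp
  have "1 - bk r m ^ m * sig r m = 0" using bk_pow[OF assms(1,2)] ne by (simp add: sig_def)
  then show ?thesis unfolding Lam_def using assms by (intro prod_zero) auto
qed

lemma ray_phi:
  assumes D: "dil D" and \<psi>M: "\<And>w. w \<in> D \<Longrightarrow> cmod (\<psi> w) \<le> M"
    and \<phi>: "\<And>z. z \<in> D \<Longrightarrow> \<phi> z = (\<Sum>m\<in>{1..K}. a m * z ^ m) + z ^ Suc K * \<psi> z"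
    and z: "z \<in> D"
  shows "ray \<phi> z ((\<Sum>m\<in>{1..K}. cmod (a m) * cmod z ^ m) + cmod z ^ Suc K * M)"
  unfolding ray_def
proof (intro allI impI)
  fix t :: real assume t: "0 < t \<and> t \<le> 1"
  have zt: "z * of_real t \<in> D" using D z t unfolding dil_def by auto
  have tp: "t ^ m \<le> t" if "m \<ge> 1" for m
    using t that power_decreasing[of 1 m t] by auto
  have "cmod (\<phi> (z * of_real t)) \<le> cmod (\<Sum>m\<in>{1..K}. a m * (z * of_real t) ^ m) + cmod ((z * of_real t) ^ Suc K * \<psi> (z * of_real t))"
    unfolding \<phi>[OF zt] by (rule norm_triangle_ineq)
  also have "cmod (\<Sum>m\<in>{1..K}. a m * (z * of_real t) ^ m) \<le> (\<Sum>m\<in>{1..K}. cmod (a m) * cmod z ^ m * t)"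
  proof (rule order_trans[OF norm_sum sum_mono])
    fix m assume "m \<in> {1..K}"
    then have "t ^ m \<le> t" by (intro tp) auto
    moreover have "cmod (a m * (z * of_real t) ^ m) = cmod (a m) * cmod z ^ m * t ^ m"
      using t by (simp add: norm_mult norm_power power_mult_distrib)
    ultimately show "cmod (a m * (z * of_real t) ^ m) \<le> cmod (a m) * cmod z ^ m * t"
      by (simp add: mult_left_mono)
  qed
  also have "cmod ((z * of_real t) ^ Suc K * \<psi> (z * of_real t)) \<le> cmod z ^ Suc K * M * t"
  proof -
    have "cmod ((z * of_real t) ^ Suc K * \<psi> (z * of_real t)) = cmod z ^ Suc K * t ^ Suc K * cmod (\<psi> (z * of_real t))"
      using t by (simp add: norm_mult norm_power power_mult_distrib)
    also have "\<dots> \<le> cmod z ^ Suc K * t * M"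
      using \<psi>M[OF zt] tp[of "Suc K"] t
      by (intro mult_mono) auto
    finally show ?thesis by (simp add: mult_ac)
  qed
  finally show "cmod (\<phi> (z * of_real t)) \<le> ((\<Sum>m\<in>{1..K}. cmod (a m) * cmod z ^ m) + cmod z ^ Suc K * M) * t"
    by (simp add: sum_distrib_right sum_distrib_left algebra_simps)
qed

lemma Hs_decomp:
  assumes D: "dil D" and \<psi>M: "\<And>w. w \<in> D \<Longrightarrow> cmod (\<psi> w) \<le> M" and r: "r > 1"
    and \<phi>: "\<And>z. z \<in> D \<Longrightarrow> \<phi> z = (\<Sum>m\<in>{1..K}. a m * z ^ m) + z ^ Suc K * \<psi> z"
  shows "z \<in> D \<Longrightarrow> Hs r N \<phi> z = (\<Sum>m\<in>{1..K}. a m * of_real (Lam r N m) * z ^ m) + z ^ Suc K * Psi r K \<psi> N z"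
proof (induction N arbitrary: z)
  case 0
  have "Pow {1..0::nat} = {{}}" by auto
  then show ?case using \<phi>[OF 0] by (simp add: Hs_def Qs_def Lam_def)
next
  case (Suc N)
  note z = Suc.prems
  define b where "b = bk r (Suc N)"
  have b: "0 < b" "b \<le> 1" using bk_pos[OF r] bk_le1[OF r] by (auto simp: b_def)
  have cj: "0 < b / r ^ j" "b / r ^ j \<le> 1" for j
    using b r by (auto simp: field_simps intro: order_trans[OF _ one_le_power])
  have inD: "z * of_real (b / r ^ j) \<in> D" for j using D z cj unfolding dil_def by (meson less_imp_le)
  obtain M' where M': "\<And>w. w \<in> D \<Longrightarrow> cmod (Psi r K \<psi> N w) \<le> M'"
    using Psi_bounded[where \<psi>=\<psi> and M=M and K=K and N=N, OF D \<psi>M r] by blast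
  define P where "P = (\<lambda>j. \<Sum>m\<in>{1..K}. a m * of_real (Lam r N m) * z ^ m * of_real ((b / r ^ j) ^ m))"
  define Q where "Q = (\<lambda>j. z ^ Suc K * (of_real ((b / r ^ j) ^ Suc K) * Psi r K \<psi> N (z * of_real (b / r ^ j))))"
  define SQ where "SQ = (\<Sum>j. of_real ((b / r ^ j) ^ Suc K) * Psi r K \<psi> N (z * of_real (b / r ^ j)))"
  have rec: "(\<lambda>j. Hs r N \<phi> (z * of_real (b / r ^ j))) sums (Hs r N \<phi> z - Hs r (Suc N) \<phi> z)"
    unfolding b_def by (rule Hs_rec[OF ray_phi[OF D \<psi>M \<phi> z] r])
  have eqj: "Hs r N \<phi> (z * of_real (b / r ^ j)) = P j + Q j" for j
  proof -
    have "(z * of_real (b / r ^ j)) ^ m = z ^ m * of_real ((b / r ^ j) ^ m)" for m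
      by (simp only: power_mult_distrib of_real_power)
    then show ?thesis unfolding Suc.IH[OF inD] P_def Q_def
      by (simp add: mult_ac)
  qed
  have sP: "P sums (\<Sum>m\<in>{1..K}. a m * of_real (Lam r N m) * z ^ m * of_real (b ^ m * sig r m))"
    unfolding P_def
  proof (rule sums_sum)
    fix m assume "m \<in> {1..K}"
    then have "(\<lambda>j. (b / r ^ j) ^ m) sums (b ^ m * sig r m)" by (intro geom_c[OF r]) auto
    then have "(\<lambda>j. of_real ((b / r ^ j) ^ m) :: complex) sums of_real (b ^ m * sig r m)"
      by (rule sums_of_real)
    then show "(\<lambda>j. a m * of_real (Lam r N m) * z ^ m * of_real ((b / r ^ j) ^ m)) sums
               (a m * of_real (Lam r N m) * z ^ m * of_real (b ^ m * sig r m))"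
      by (rule sums_mult)
  qed
  have sQ: "Q sums (z ^ Suc K * SQ)"
    unfolding Q_def SQ_def
    by (rule sums_mult, rule summable_sums, rule Mop_bound(1)[OF D M' r b z])
  have "(\<lambda>j. P j + Q j) sums ((\<Sum>m\<in>{1..K}. a m * of_real (Lam r N m) * z ^ m * of_real (b ^ m * sig r m)) + z ^ Suc K * SQ)"
    by (rule sums_add[OF sP sQ])
  then have "Hs r N \<phi> z - Hs r (Suc N) \<phi> z = (\<Sum>m\<in>{1..K}. a m * of_real (Lam r N m) * z ^ m * of_real (b ^ m * sig r m)) + z ^ Suc K * SQ"
    using rec unfolding eqj by (simp add: sums_iff)
  then have "Hs r (Suc N) \<phi> z = Hs r N \<phi> z - ((\<Sum>m\<in>{1..K}. a m * of_real (Lam r N m) * z ^ m * of_real (b ^ m * sig r m)) + z ^ Suc K * SQ)"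
    by (simp add: algebra_simps)
  also have "\<dots> = (\<Sum>m\<in>{1..K}. a m * of_real (Lam r N m) * z ^ m - a m * of_real (Lam r N m) * z ^ m * of_real (b ^ m * sig r m))
       + z ^ Suc K * (Psi r K \<psi> N z - SQ)"
    unfolding Suc.IH[OF z] sum_subtractf by (simp add: algebra_simps)
  also have "(\<Sum>m\<in>{1..K}. a m * of_real (Lam r N m) * z ^ m - a m * of_real (Lam r N m) * z ^ m * of_real (b ^ m * sig r m))
      = (\<Sum>m\<in>{1..K}. a m * of_real (Lam r (Suc N) m) * z ^ m)"
    unfolding Lam_Suc b_def[symmetric] by (intro sum.cong refl) (simp add: algebra_simps)
  also have "Psi r K \<psi> N z - SQ = Psi r K \<psi> (Suc N) z"
    by (simp add: Mop_def SQ_def b_def)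
  finally show ?case .
qed

definition Dn :: "real \<Rightarrow> complex set" where
  "Dn e = {z. \<exists>t\<in>{0..1}. cmod (z - of_real t) < e}"

lemma Dn_UN: "Dn e = (\<Union>t\<in>{0..1}. ball (of_real t) e)"
  by (auto simp: Dn_def dist_norm norm_minus_commute)

lemma open_Dn: "open (Dn e)" unfolding Dn_UN by auto

lemma convex_Dn: "convex (Dn e)"
  unfolding convex_def Dn_def
proof (clarify)
  fix x y :: complex and u v :: real and t1 t2
  assume uv: "0 \<le> u" "0 \<le> v" "u + v = 1" and t1: "t1 \<in> {0..1}" "cmod (x - of_real t1) < e"
    and t2: "t2 \<in> {0..1}" "cmod (y - of_real t2) < e"
  have "u * t1 + v * t2 \<in> {0..1}" using uv t1 t2
    by (auto intro: convex_bound_le[of t1 1 t2 u v, simplified])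
  moreover have "cmod (u *\<^sub>R x + v *\<^sub>R y - of_real (u * t1 + v * t2)) < e"
  proof -
    have "u *\<^sub>R x + v *\<^sub>R y - of_real (u * t1 + v * t2) = u *\<^sub>R (x - of_real t1) + v *\<^sub>R (y - of_real t2)"
      by (simp add: scaleR_conv_of_real algebra_simps)
    also have "cmod \<dots> \<le> u * cmod (x - of_real t1) + v * cmod (y - of_real t2)"
      using uv by (auto intro: order_trans[OF norm_triangle_ineq] simp: abs_of_nonneg)
    also have "\<dots> < e"
    proof (cases "u = 0")
      case True then show ?thesis using uv t2 by simp
    next
      case False
      then have "u * cmod (x - of_real t1) < u * e" using uv t1 by simp
      moreover have "v * cmod (y - of_real t2) \<le> v * e" using uv t2 by (intro mult_left_mono) auto
      ultimately show ?thesis using uv by (simp add: algebra_simps) (metis add_less_le_mono distrib_left mult_1_right uv(3))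
    qed
    finally show ?thesis .
  qed
  ultimately show "\<exists>t\<in>{0..1}. cmod (u *\<^sub>R x + v *\<^sub>R y - of_real t) < e" by blast
qed

lemma dil_Dn: "dil (Dn e)"
  unfolding dil_def Dn_def
proof (clarify)
  fix z :: complex and s t :: real
  assume s: "s \<in> {0..1}" "cmod (z - of_real s) < e" and t: "0 \<le> t" "t \<le> 1"
  have "t * s \<in> {0..1}" using s t by (auto simp: mult_le_one)
  moreover have "cmod (z * of_real t - of_real (t * s)) < e"
  proof (cases "t = 0")
    case True then show ?thesis using s by (simp add: le_less_trans[OF norm_ge_zero])
  next
    case False
    have "cmod (z * of_real t - of_real (t * s)) = t * cmod (z - of_real s)"
      using t by (simp add: norm_mult algebra_simps flip: right_diff_distrib norm_of_real)
         (metis abs_of_nonneg mult.commute norm_mult norm_of_real of_real_mult right_diff_distrib')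
    also have "\<dots> \<le> 1 * cmod (z - of_real s)" using t by (intro mult_right_mono) auto
    finally show ?thesis using s by simp
  qed
  ultimately show "\<exists>t'\<in>{0..1}. cmod (z * of_real t - of_real t') < e" by blast
qed

lemma one_in_Dn: "e > 0 \<Longrightarrow> 1 \<in> Dn e"
  unfolding Dn_def by (rule CollectI, rule bexI[of _ 1]) auto

lemma Dn_mono: "e \<le> e' \<Longrightarrow> Dn e \<subseteq> Dn e'"
  unfolding Dn_def by (auto simp: Bex_def)

lemma Dn_norm: "z \<in> Dn e \<Longrightarrow> cmod z < 1 + e"
proof -
  assume "z \<in> Dn e"
  then obtain t where t: "t \<in> {0..1}" "cmod (z - of_real t) < e" by (auto simp: Dn_def)
  have "cmod z \<le> cmod (z - of_real t) + cmod (of_real t :: complex)" using norm_triangle_ineq[of "z - of_real t" "of_real t"] by simp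
  also have "\<dots> < e + 1" using t by auto
  finally show ?thesis by simp
qed

lemma Dn_ball: assumes "z \<in> Dn e'" "e' < e" shows "ball z (e - e') \<subseteq> Dn e"
proof
  fix w assume "w \<in> ball z (e - e')"
  then have w: "cmod (w - z) < e - e'" by (simp add: dist_norm norm_minus_commute)
  obtain t where t: "t \<in> {0..1}" "cmod (z - of_real t) < e'" using assms by (auto simp: Dn_def)
  have "cmod (w - of_real t) \<le> cmod (w - z) + cmod (z - of_real t)" by (rule norm_diff_triangle_le) auto
  also have "\<dots> < e" using w t by simp
  finally show "w \<in> Dn e" using t by (auto simp: Dn_def)
qed

lemma cj_bounds: fixes r b :: real assumes "r > 1" "0 < b" "b \<le> 1" shows "0 < b / r ^ j \<and> b / r ^ j \<le> 1"
proof -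
  have "0 < b / r ^ j" using assms by simp
  moreover have "b \<le> r ^ j" using assms one_le_power[of r j] by linarith
  then have "b / r ^ j \<le> 1" using assms by simp
  ultimately show ?thesis by simp
qed

lemma Mop_holo:
  assumes hol: "\<Psi> holomorphic_on Dn e" and M: "\<And>w. w \<in> Dn e \<Longrightarrow> cmod (\<Psi> w) \<le> M"
    and r: "r > 1" and b: "0 < b" "b \<le> 1"
  shows "Mop r K b \<Psi> holomorphic_on Dn e"
proof -
  define f where "f = (\<lambda>n z. \<Sum>j<n. of_real ((b / r ^ j) ^ Suc K) * \<Psi> (z * of_real (b / r ^ j)))"
  define g where "g = (\<lambda>z. \<Sum>j. of_real ((b / r ^ j) ^ Suc K) * \<Psi> (z * of_real (b / r ^ j)))"
  have cj: "0 < b / r ^ j" "b / r ^ j \<le> 1" for j using cj_bounds[OF r b] by auto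
  have inD: "z * of_real (b / r ^ j) \<in> Dn e" if "z \<in> Dn e" for z j
    using dil_Dn that cj unfolding dil_def by (meson less_imp_le)
  have g1: "(\<lambda>j. (b / r ^ j) ^ Suc K * M) sums (b ^ Suc K * sig r (Suc K) * M)"
    by (rule sums_mult2[OF geom_c[OF r]]) simp
  have ul: "uniform_limit (Dn e) f g sequentially"
    unfolding f_def g_def
  proof (rule Weierstrass_m_test_ev[OF _ sums_summable[OF g1]])
    show "\<forall>\<^sub>F n in sequentially. \<forall>z\<in>Dn e. norm (of_real ((b / r ^ n) ^ Suc K) * \<Psi> (z * of_real (b / r ^ n))) \<le> (b / r ^ n) ^ Suc K * M"
    proof (intro always_eventually allI ballI)
      fix n z assume z: "z \<in> Dn e"
      have "norm (of_real ((b / r ^ n) ^ Suc K) * \<Psi> (z * of_real (b / r ^ n))) = (b / r ^ n) ^ Suc K * cmod (\<Psi> (z * of_real (b / r ^ n)))"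
        using cj[of n] by (simp only: norm_mult norm_of_real abs_of_nonneg zero_le_power less_imp_le)
      also have "\<dots> \<le> (b / r ^ n) ^ Suc K * M"
      proof (rule mult_left_mono)
        show "0 \<le> (b / r ^ n) ^ Suc K" using cj[of n] by (simp only: zero_le_power less_imp_le)
      qed (use M[OF inD[OF z]] in auto)
      finally show "norm (of_real ((b / r ^ n) ^ Suc K) * \<Psi> (z * of_real (b / r ^ n))) \<le> (b / r ^ n) ^ Suc K * M" .
    qed
  qed
  have "g holomorphic_on Dn e"
  proof (rule holomorphic_uniform_sequence[OF open_Dn])
    fix n
    show "f n holomorphic_on Dn e" unfolding f_def
    proof (intro holomorphic_intros)
      fix j
      have "(\<lambda>z. z * of_real (b / r ^ j)) holomorphic_on Dn e" by (intro holomorphic_intros)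
      moreover have "(\<lambda>z. z * of_real (b / r ^ j)) ` Dn e \<subseteq> Dn e" using inD by auto
      ultimately show "(\<lambda>z. \<Psi> (z * of_real (b / r ^ j))) holomorphic_on Dn e"
        using holomorphic_on_compose_gen[OF _ hol] unfolding o_def by blast
    qed
  next
    fix x assume "x \<in> Dn e"
    then obtain d where d: "d > 0" "ball x d \<subseteq> Dn e" using open_Dn open_contains_ball by blast
    have "cball x (d/2) \<subseteq> ball x d" using d by (intro cball_subset_ball_iff[THEN iffD2]) auto
    then have "cball x (d/2) \<subseteq> Dn e" using d by blast
    moreover have "uniform_limit (cball x (d/2)) f g sequentially"
      using ul calculation by (rule uniform_limit_on_subset)
    ultimately show "\<exists>d>0. cball x d \<subseteq> Dn e \<and> uniform_limit (cball x d) f g sequentially"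
      using d by (intro exI[of _ "d/2"]) auto
  qed
  moreover have "Mop r K b \<Psi> = (\<lambda>z. \<Psi> z - g z)" by (simp add: Mop_def g_def fun_eq_iff)
  ultimately show ?thesis by (simp add: holomorphic_on_diff hol)
qed

lemma deriv_bound:
  assumes hol: "\<Psi> holomorphic_on Dn e" and M: "\<And>w. w \<in> Dn e \<Longrightarrow> cmod (\<Psi> w) \<le> M"
    and e: "0 < e'" "e' < e" and w: "w \<in> Dn e'"
  shows "cmod (deriv \<Psi> w) \<le> 2 * M / (e - e')"
proof -
  define \<rho> where "\<rho> = (e - e') / 2"
  have \<rho>: "\<rho> > 0" using e by (simp add: \<rho>_def)
  have B: "ball w (e - e') \<subseteq> Dn e" by (rule Dn_ball[OF w e(2)])
  have C: "cball w \<rho> \<subseteq> Dn e"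
  proof -
    have "cball w \<rho> \<subseteq> ball w (e - e')" using e \<rho> by (intro cball_subset_ball_iff[THEN iffD2]) (auto simp: \<rho>_def)
    then show ?thesis using B by blast
  qed
  have "cmod ((deriv ^^ 1) \<Psi> w) \<le> fact 1 * M / \<rho> ^ 1"
  proof (rule Cauchy_inequality)
    show "\<Psi> holomorphic_on ball w \<rho>" using hol C ball_subset_cball by (meson holomorphic_on_subset subset_trans)
    show "continuous_on (cball w \<rho>) \<Psi>"
      using holomorphic_on_imp_continuous_on[OF hol] C by (rule continuous_on_subset)
    show "0 < \<rho>" by (rule \<rho>)
    fix x assume "cmod (w - x) = \<rho>"
    then have "x \<in> cball w \<rho>" by (simp add: dist_norm)
    then show "cmod (\<Psi> x) \<le> M" using C M by blast
  qed
  then show ?thesis by (simp add: \<rho>_def mult.commute)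
qed

lemma lip_bound:
  assumes hol: "\<Psi> holomorphic_on Dn e" and M: "\<And>w. w \<in> Dn e \<Longrightarrow> cmod (\<Psi> w) \<le> M"
    and e: "0 < e'" "e' < e" and w: "w \<in> Dn e'" and b: "0 < b" "b \<le> 1"
  shows "cmod (\<Psi> w - \<Psi> (w * of_real b)) \<le> 2 * M / (e - e') * ((1 - b) * cmod w)"
proof -
  have wb: "w * of_real b \<in> Dn e'" using dil_Dn w b unfolding dil_def by auto
  have sub: "Dn e' \<subseteq> Dn e" using e by (intro Dn_mono) auto
  have "cmod (\<Psi> w - \<Psi> (w * of_real b)) \<le> 2 * M / (e - e') * cmod (w - w * of_real b)"
  proof (rule field_differentiable_bound[OF convex_Dn])
    fix z assume z: "z \<in> Dn e'"
    then have "z \<in> Dn e" using sub by auto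
    then have "\<Psi> field_differentiable at z"
      using hol open_Dn holomorphic_on_imp_differentiable_at by blast
    then show "(\<Psi> has_field_derivative deriv \<Psi> z) (at z within Dn e')"
      using DERIV_deriv_iff_field_differentiable has_field_derivative_at_within by blast
    show "cmod (deriv \<Psi> z) \<le> 2 * M / (e - e')" by (rule deriv_bound[OF hol M e z])
  qed (use w wb in auto)
  also have "cmod (w - w * of_real b) = (1 - b) * cmod w"
  proof -
    have "w - w * of_real b = of_real (1 - b) * w" by (simp add: algebra_simps)
    then have "cmod (w - w * of_real b) = cmod (of_real (1 - b) :: complex) * cmod w" by (simp only: norm_mult)
    then show ?thesis using b by (simp only: norm_of_real)
  qed
  finally show ?thesis .
qed

lemma contraction:
  assumes hol: "\<Psi> holomorphic_on Dn e" and M: "\<And>w. w \<in> Dn e \<Longrightarrow> cmod (\<Psi> w) \<le> M"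
    and e: "0 < e'" "e' < e" and z: "z \<in> Dn e'" and b: "0 < b" "b \<le> 1" and r: "r > 1"
  shows "cmod (Mop r K b \<Psi> z) \<le> (1 - b ^ Suc K) * M + (sig r (Suc K) - 1) * M
            + sig r (Suc K) * (2 * M / (e - e') * ((1 - b) * (1 + e)))"
proof -
  define c where "c = (\<lambda>j. (b / r ^ j) ^ Suc K)"
  define w where "w = (\<lambda>j. z * of_real (1 / r ^ j))"
  define L where "L = 2 * M / (e - e') * ((1 - b) * (1 + e))"
  define q where "q = 1 / r ^ Suc K"
  have sub: "Dn e' \<subseteq> Dn e" using e by (intro Dn_mono) auto
  have M0: "0 \<le> M" using M[of 1] one_in_Dn[of e] e by (meson norm_ge_zero order_trans less_trans)
  have L0: "0 \<le> L" using M0 e b unfolding L_def by (intro mult_nonneg_nonneg) auto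
  have rj: "0 < 1 / r ^ j" "1 / r ^ j \<le> 1" for j using cj_bounds[OF r, of 1 j] by auto
  have wD: "w j \<in> Dn e'" for j using dil_Dn z rj[of j] unfolding dil_def w_def by (meson less_imp_le)
  have c0: "0 \<le> c j" for j using b r unfolding c_def by simp
  have pts: "z * of_real (b / r ^ j) = w j * of_real b" for j
    unfolding w_def by (simp add: field_simps)
  have gc: "c sums (b ^ Suc K * sig r (Suc K))" unfolding c_def by (rule geom_c[OF r]) simp
  have gcM: "(\<lambda>j. c j * M) sums (b ^ Suc K * sig r (Suc K) * M)" by (rule sums_mult2[OF gc])
  have gcL: "(\<lambda>j. c j * L) sums (b ^ Suc K * sig r (Suc K) * L)" by (rule sums_mult2[OF gc])
  have nA: "norm (of_real (c j) * \<Psi> (w j)) \<le> c j * M" for j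
    using M[of "w j"] wD[of j] sub c0[of j] by (auto simp: norm_mult intro: mult_left_mono)
  have sA: "summable (\<lambda>j. of_real (c j) * \<Psi> (w j))"
    by (rule summable_norm_cancel, rule summable_comparison_test'[OF sums_summable[OF gcM]]) (use nA in auto)
  define T where "T = (\<lambda>j. of_real (c j) * (\<Psi> (w j) - \<Psi> (w j * of_real b)))"
  have nT: "norm (T j) \<le> c j * L" for j
  proof -
    have "cmod (\<Psi> (w j) - \<Psi> (w j * of_real b)) \<le> 2 * M / (e - e') * ((1 - b) * cmod (w j))"
      by (rule lip_bound[OF hol M e wD b])
    also have "\<dots> \<le> L" unfolding L_def
    proof (intro mult_left_mono)
      show "cmod (w j) \<le> 1 + e" using Dn_norm[OF wD[of j]] e by simp
      show "0 \<le> 1 - b" using b by simp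
      show "0 \<le> 2 * M / (e - e')" using M0 e by simp
    qed
    finally show ?thesis unfolding T_def using c0[of j] by (auto simp: norm_mult intro: mult_left_mono)
  qed
  have sT: "summable T"
    by (rule summable_norm_cancel, rule summable_comparison_test'[OF sums_summable[OF gcL]]) (use nT in auto)
  have sB: "summable (\<lambda>j. of_real (c j) * \<Psi> (w j * of_real b))"
  proof -
    have "(\<lambda>j. of_real (c j) * \<Psi> (w j * of_real b)) = (\<lambda>j. of_real (c j) * \<Psi> (w j) - T j)"
      by (auto simp: T_def algebra_simps)
    then show ?thesis using summable_diff[OF sA sT] by simp
  qed
  have eqB: "(\<Sum>j. of_real (c j) * \<Psi> (w j * of_real b)) = (\<Sum>j. of_real (c j) * \<Psi> (w j)) - suminf T"
  proof -
    have "(\<lambda>j. of_real (c j) * \<Psi> (w j * of_real b)) = (\<lambda>j. of_real (c j) * \<Psi> (w j) - T j)"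
      by (auto simp: T_def algebra_simps)
    then show ?thesis using suminf_diff[OF sA sT] by simp
  qed
  have Mop_eq: "Mop r K b \<Psi> z = (\<Psi> z - (\<Sum>j. of_real (c j) * \<Psi> (w j))) + suminf T"
    unfolding Mop_def c_def[symmetric] pts eqB[unfolded c_def] by (simp add: c_def)
  have head: "(\<Sum>j. of_real (c j) * \<Psi> (w j)) = of_real (b ^ Suc K) * \<Psi> z + (\<Sum>j. of_real (c (Suc j)) * \<Psi> (w (Suc j)))"
    using suminf_split_head[OF sA] by (simp add: c_def w_def)
  have gq: "(\<lambda>j. q ^ Suc j * M) sums ((sig r (Suc K) - 1) * M)"
  proof -
    have rK: "1 < r ^ Suc K" using r by (intro one_less_power) auto
    have q: "norm q < 1" "0 < q" using rK r unfolding q_def by auto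
    have "(\<lambda>j. q ^ j) sums (1 / (1 - q))" by (rule geometric_sums[OF q(1)])
    then have "(\<lambda>j. q * q ^ j * M) sums (q * (1 / (1 - q)) * M)" by (intro sums_mult2 sums_mult)
    moreover have "q * (1 / (1 - q)) = sig r (Suc K) - 1"
      using q by (simp add: sig_def q_def field_simps)
    ultimately show ?thesis by (simp only: power_Suc)
  qed
  have ntail: "norm (of_real (c (Suc j)) * \<Psi> (w (Suc j))) \<le> q ^ Suc j * M" for j
  proof -
    have "c (Suc j) \<le> q ^ Suc j"
    proof -
      have "b / r ^ Suc j \<le> 1 / r ^ Suc j" using b r by (simp add: divide_right_mono)
      then have "c (Suc j) \<le> (1 / r ^ Suc j) ^ Suc K" unfolding c_def using b r
        by (intro power_mono) auto
      also have "\<dots> = q ^ Suc j"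
      proof -
        have "(1 / r ^ Suc j) ^ Suc K = 1 / r ^ (Suc j * Suc K)" by (simp only: power_one_over power_mult)
        moreover have "q ^ Suc j = 1 / r ^ (Suc K * Suc j)" unfolding q_def by (simp only: power_one_over power_mult)
        ultimately show ?thesis by (simp only: mult.commute)
      qed
      finally show ?thesis .
    qed
    then have "c (Suc j) * M \<le> q ^ Suc j * M" using M0 by (rule mult_right_mono)
    then show ?thesis using nA[of "Suc j"] by linarith
  qed
  have stail: "summable (\<lambda>j. norm (of_real (c (Suc j)) * \<Psi> (w (Suc j))))"
    by (rule summable_comparison_test'[OF sums_summable[OF gq]]) (use ntail in auto)
  have btail: "cmod (\<Sum>j. of_real (c (Suc j)) * \<Psi> (w (Suc j))) \<le> (sig r (Suc K) - 1) * M"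
  proof -
    have "cmod (\<Sum>j. of_real (c (Suc j)) * \<Psi> (w (Suc j))) \<le> (\<Sum>j. norm (of_real (c (Suc j)) * \<Psi> (w (Suc j))))"
      by (rule summable_norm[OF stail])
    also have "\<dots> \<le> (\<Sum>j. q ^ Suc j * M)" by (rule suminf_le[OF ntail stail sums_summable[OF gq]])
    also have "\<dots> = (sig r (Suc K) - 1) * M" using gq by (simp add: sums_iff)
    finally show ?thesis .
  qed
  have part1: "cmod (\<Psi> z - (\<Sum>j. of_real (c j) * \<Psi> (w j))) \<le> (1 - b ^ Suc K) * M + (sig r (Suc K) - 1) * M"
  proof -
    have "\<Psi> z - (\<Sum>j. of_real (c j) * \<Psi> (w j)) = of_real (1 - b ^ Suc K) * \<Psi> z - (\<Sum>j. of_real (c (Suc j)) * \<Psi> (w (Suc j)))"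
      unfolding head by (simp add: algebra_simps)
    also have "cmod \<dots> \<le> cmod (of_real (1 - b ^ Suc K) * \<Psi> z) + cmod (\<Sum>j. of_real (c (Suc j)) * \<Psi> (w (Suc j)))"
      by (rule norm_triangle_ineq4)
    also have "cmod (of_real (1 - b ^ Suc K) * \<Psi> z) \<le> (1 - b ^ Suc K) * M"
    proof -
      have "b ^ Suc K \<le> 1" using b by (intro power_le_one) auto
      then have "cmod (of_real (1 - b ^ Suc K) * \<Psi> z) = (1 - b ^ Suc K) * cmod (\<Psi> z)"
        by (simp only: norm_mult norm_of_real abs_of_nonneg diff_ge_0_iff_ge)
      also have "\<dots> \<le> (1 - b ^ Suc K) * M" using M[of z] z sub \<open>b ^ Suc K \<le> 1\<close> by (intro mult_left_mono) auto
      finally show ?thesis .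
    qed
    finally show ?thesis using btail by linarith
  qed
  have part2: "cmod (suminf T) \<le> sig r (Suc K) * L"
  proof -
    have sTn: "summable (\<lambda>j. norm (T j))"
      by (rule summable_comparison_test'[OF sums_summable[OF gcL]]) (use nT in auto)
    have "cmod (suminf T) \<le> (\<Sum>j. norm (T j))" by (rule summable_norm[OF sTn])
    also have "\<dots> \<le> (\<Sum>j. c j * L)" by (rule suminf_le[OF nT sTn sums_summable[OF gcL]])
    also have "\<dots> = b ^ Suc K * sig r (Suc K) * L" using gcL by (simp add: sums_iff)
    also have "\<dots> \<le> sig r (Suc K) * L"
    proof -
      have "b ^ Suc K \<le> 1" using b by (intro power_le_one) auto
      then have "b ^ Suc K * (sig r (Suc K) * L) \<le> 1 * (sig r (Suc K) * L)"
        using sig_pos[OF r, of "Suc K"] L0 by (intro mult_right_mono) auto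
      then show ?thesis by (simp only: mult.assoc mult_1)
    qed
    finally show ?thesis .
  qed
  have "cmod (Mop r K b \<Psi> z) \<le> cmod (\<Psi> z - (\<Sum>j. of_real (c j) * \<Psi> (w j))) + cmod (suminf T)"
    unfolding Mop_eq by (rule norm_triangle_ineq)
  also have "\<dots> \<le> (1 - b ^ Suc K) * M + (sig r (Suc K) - 1) * M + sig r (Suc K) * L"
    using part1 part2 by linarith
  finally show ?thesis unfolding L_def .
qed

lemma bernoulli_le: fixes b :: real assumes "0 \<le> b" "b \<le> 1" shows "1 - b ^ n \<le> real n * (1 - b)"
proof (induction n)
  case 0 then show ?case by simp
next
  case (Suc n)
  have "b ^ n \<le> 1" using assms by (simp add: power_le_one)
  then have "b ^ n * (1 - b) \<le> 1 - b" using assms by (simp add: mult_left_le_one_le)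
  then have "1 - b ^ Suc n = (1 - b ^ n) + b ^ n * (1 - b)" by (simp add: algebra_simps)
  also have "\<dots> \<le> real n * (1 - b) + (1 - b)" using Suc \<open>b ^ n * (1 - b) \<le> 1 - b\<close> by linarith
  finally show ?case by (simp add: algebra_simps)
qed

lemma fact_alg: "(x::real) * A + y * A + s * (2 * A / g * z) = (x + y + s * (2 / g * z)) * A"
proof -
  have "s * (2 * A / g * z) = s * (2 / g * z) * A" by simp
  then show ?thesis by (simp only: distrib_right)
qed

lemma Psi_hol_bounded:
  assumes r: "r > 1" and hol: "\<psi> holomorphic_on Dn e" and M: "\<And>w. w \<in> Dn e \<Longrightarrow> cmod (\<psi> w) \<le> M"
  shows "Psi r K \<psi> N holomorphic_on Dn e \<and> (\<exists>M'. \<forall>w\<in>Dn e. cmod (Psi r K \<psi> N w) \<le> M')"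
proof (induction N)
  case 0 then show ?case using hol M by auto
next
  case (Suc N)
  then obtain M' where M': "\<And>w. w \<in> Dn e \<Longrightarrow> cmod (Psi r K \<psi> N w) \<le> M'" by blast
  have "Psi r K \<psi> (Suc N) holomorphic_on Dn e"
    using Mop_holo[OF conjunct1[OF Suc] M' r bk_pos[OF r] bk_le1[OF r]] by simp
  moreover have "\<exists>M'. \<forall>w\<in>Dn e. cmod (Psi r K \<psi> (Suc N) w) \<le> M'"
    using Psi_bounded[where \<psi>=\<psi> and M=M and K=K and N="Suc N", OF dil_Dn M r] by blast
  ultimately show ?case by blast
qed

lemma Psi_tendsto:
  assumes r: "r > 1" and K: "4 \<le> r ^ Suc K" and \<eta>: "\<eta> > 0"
    and hol: "\<psi> holomorphic_on Dn (2 * \<eta>)" and M: "\<And>w. w \<in> Dn (2 * \<eta>) \<Longrightarrow> cmod (\<psi> w) \<le> M"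
  shows "(\<lambda>N. Psi r K \<psi> N 1) \<longlonglongrightarrow> 0"
proof -
  define e where "e = (\<lambda>N::nat. \<eta> + \<eta> / real (Suc N))"
  define sg where "sg = sig r (Suc K)"
  have sg: "sg - 1 \<le> 1 / 3" "sg > 0"
  proof -
    have p1: "r ^ Suc K > 0" using r by simp
    have p2: "r ^ Suc K - 1 > 0" using K by simp
    have gen: "\<And>R::real. R > 1 \<Longrightarrow> 1 / (1 - 1 / R) - 1 = 1 / (R - 1)" by (simp add: field_simps)
    have "sg - 1 = 1 / (r ^ Suc K - 1)" using gen[of "r ^ Suc K"] p2 unfolding sg_def sig_def by simp
    also have "\<dots> \<le> 1 / 3" using K by (simp add: field_simps)
    finally show "sg - 1 \<le> 1 / 3" .
    show "sg > 0" unfolding sg_def by (rule sig_pos[OF r]) simp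
  qed
  define U where "U = (\<lambda>N::nat. real (Suc K) * (1 / r) ^ Suc N
      + sg * (2 * (1 + 2 * \<eta>) / \<eta>) * (real ((N + 2) choose 2) * (1 / r) ^ N) * (2 / r))"
  have U0: "U \<longlonglongrightarrow> 0"
  proof -
    have g: "(\<lambda>N. (1 / r) ^ N) \<longlonglongrightarrow> 0" using r by (intro LIMSEQ_power_zero) auto
    have h: "(\<lambda>N. real ((N + 2) choose 2) * (1 / r) ^ N) \<longlonglongrightarrow> 0"
      using binom_geom_summable[of "1/r" 2] r by (intro summable_LIMSEQ_zero) auto
    have g1: "(\<lambda>N. (1 / r) ^ Suc N) \<longlonglongrightarrow> 0" using LIMSEQ_Suc[OF g] .
    show ?thesis unfolding U_def
      using tendsto_add[OF tendsto_mult_right_zero[OF g1, of "real (Suc K)"]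
                       tendsto_mult_left_zero[OF tendsto_mult_right_zero[OF h, of "sg * (2 * (1 + 2 * \<eta>) / \<eta>)"], of "2/r"]]
      by (simp add: mult_ac)
  qed
  then have "\<forall>\<^sub>F N in sequentially. U N < 1 / 6" by (rule order_tendstoD) simp
  then obtain N0 where N0: "\<And>N. N \<ge> N0 \<Longrightarrow> U N < 1 / 6" by (auto simp: eventually_sequentially)
  have factor: "(1 - bk r (Suc N) ^ Suc K) + (sg - 1) + sg * (2 / (e N - e (Suc N)) * ((1 - bk r (Suc N)) * (1 + e N))) \<le> 1 / 2"
    if "N \<ge> N0" for N
  proof -
    define b where "b = bk r (Suc N)"
    have b: "0 < b" "b \<le> 1" "1 - b \<le> (1 / r) ^ Suc N"
      using bk_pos[OF r] bk_le1[OF r] bk_close[OF r, of "Suc N"] by (auto simp: b_def power_one_over)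
    have gap: "e N - e (Suc N) = \<eta> / (real (Suc N) * real (Suc (Suc N)))"
      unfolding e_def by (simp add: field_simps)
    have eN: "1 + e N \<le> 1 + 2 * \<eta>" unfolding e_def using \<eta> by (simp add: field_simps)
    have t1: "1 - b ^ Suc K \<le> real (Suc K) * (1 / r) ^ Suc N"
      using bernoulli_le[of b "Suc K"] b by (meson mult_left_mono of_nat_0_le_iff order_trans less_imp_le)
    have "2 / (e N - e (Suc N)) * ((1 - b) * (1 + e N)) \<le> 2 / (e N - e (Suc N)) * ((1 / r) ^ Suc N * (1 + 2 * \<eta>))"
    proof (rule mult_left_mono)
      show "(1 - b) * (1 + e N) \<le> (1 / r) ^ Suc N * (1 + 2 * \<eta>)"
        using b eN \<eta> unfolding e_def by (intro mult_mono) auto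
      show "0 \<le> 2 / (e N - e (Suc N))" using \<eta> unfolding gap by simp
    qed
    also have "\<dots> = (2 * (1 + 2 * \<eta>) / \<eta>) * (real ((N + 2) choose 2) * (1 / r) ^ N) * (2 / r)"
    proof -
      have c2n: "((N + 2) choose 2) * 2 = Suc N * Suc (Suc N)"
      proof (induction N)
        case 0 then show ?case by (simp add: choose_two)
      next
        case (Suc N) then show ?case by (simp add: choose_two)
      qed
      have c2: "real ((N + 2) choose 2) = real (Suc N) * real (Suc (Suc N)) / 2"
      proof -
        have "real ((N + 2) choose 2) * 2 = real (Suc N) * real (Suc (Suc N))"
          by (metis c2n of_nat_mult of_nat_numeral)
        then show ?thesis by linarith
      qed
      show ?thesis unfolding gap c2 using \<eta> r by (simp add: field_simps)
    qed
    finally have t3: "sg * (2 / (e N - e (Suc N)) * ((1 - b) * (1 + e N))) \<le> sg * ((2 * (1 + 2 * \<eta>) / \<eta>) * (real ((N + 2) choose 2) * (1 / r) ^ N) * (2 / r))"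
      using sg by (intro mult_left_mono) auto
    have "(1 - b ^ Suc K) + (sg - 1) + sg * (2 / (e N - e (Suc N)) * ((1 - b) * (1 + e N))) \<le> U N + 1 / 3"
      using t1 t3 sg unfolding U_def by (simp add: mult_ac)
    also have "\<dots> \<le> 1 / 2" using N0[OF that] by simp
    finally show ?thesis unfolding b_def .
  qed
  have HB: "Psi r K \<psi> N holomorphic_on Dn (2 * \<eta>) \<and> (\<exists>M'. \<forall>w\<in>Dn (2 * \<eta>). cmod (Psi r K \<psi> N w) \<le> M')" for N
    by (rule Psi_hol_bounded[OF r hol M])
  have eN2: "e N \<le> 2 * \<eta>" for N unfolding e_def using \<eta> by (simp add: field_simps)
  have eNpos: "e N > 0" "e (Suc N) < e N" for N
  proof -
    show "e N > 0" unfolding e_def using \<eta> by (simp add: add_pos_pos)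
    have "\<eta> / real (Suc (Suc N)) < \<eta> / real (Suc N)" using \<eta> by (intro divide_strict_left_mono) auto
    then show "e (Suc N) < e N" unfolding e_def by simp
  qed
  obtain C0 where C0: "\<And>w. w \<in> Dn (2 * \<eta>) \<Longrightarrow> cmod (Psi r K \<psi> N0 w) \<le> C0" using HB[of N0] by blast
  have C00: "C0 \<ge> 0" using C0[of 1] one_in_Dn[of "2 * \<eta>"] \<eta> by (meson norm_ge_zero order_trans mult_pos_pos zero_less_numeral)
  have main: "\<forall>w\<in>Dn (e (N0 + n)). cmod (Psi r K \<psi> (N0 + n) w) \<le> C0 * (1 / 2) ^ n" for n
  proof (induction n)
    case 0
    then show ?case using C0 Dn_mono[OF eN2[of N0]] by auto
  next
    case (Suc n)
    define N where "N = N0 + n"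
    have IH: "\<And>w. w \<in> Dn (e N) \<Longrightarrow> cmod (Psi r K \<psi> N w) \<le> C0 * (1 / 2) ^ n" using Suc N_def by auto
    have holN: "Psi r K \<psi> N holomorphic_on Dn (e N)"
      using HB[of N] Dn_mono[OF eN2[of N]] holomorphic_on_subset by blast
    show ?case
    proof
      fix w assume w: "w \<in> Dn (e (N0 + Suc n))"
      then have w': "w \<in> Dn (e (Suc N))" by (simp add: N_def)
      have "cmod (Psi r K \<psi> (Suc N) w) \<le> (1 - bk r (Suc N) ^ Suc K) * (C0 * (1 / 2) ^ n) + (sg - 1) * (C0 * (1 / 2) ^ n)
            + sg * (2 * (C0 * (1 / 2) ^ n) / (e N - e (Suc N)) * ((1 - bk r (Suc N)) * (1 + e N)))"
        unfolding sg_def Psi.simps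
        by (rule contraction[OF holN IH eNpos(1) eNpos(2) w' bk_pos[OF r] bk_le1[OF r] r]) auto
      also have "\<dots> = ((1 - bk r (Suc N) ^ Suc K) + (sg - 1) + sg * (2 / (e N - e (Suc N)) * ((1 - bk r (Suc N)) * (1 + e N)))) * (C0 * (1 / 2) ^ n)"
        by (rule fact_alg)
      also have "\<dots> \<le> 1 / 2 * (C0 * (1 / 2) ^ n)"
        using factor[of N] C00 by (intro mult_right_mono) (auto simp: N_def)
      finally show "cmod (Psi r K \<psi> (N0 + Suc n) w) \<le> C0 * (1 / 2) ^ Suc n" by (simp add: N_def mult_ac)
    qed
  qed
  have b1: "cmod (Psi r K \<psi> (n + N0) 1) \<le> C0 * (1 / 2) ^ n" for n
    using main[of n] one_in_Dn[OF eNpos(1)[of "N0 + n"]] by (simp add: add.commute)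
  have "(\<lambda>n. Psi r K \<psi> (n + N0) 1) \<longlonglongrightarrow> 0"
  proof (rule Lim_null_comparison[OF always_eventually])
    show "\<forall>n. norm (Psi r K \<psi> (n + N0) 1) \<le> C0 * (1 / 2) ^ n" using b1 by auto
    show "(\<lambda>n. C0 * (1 / 2) ^ n) \<longlonglongrightarrow> 0" by (intro tendsto_mult_right_zero LIMSEQ_power_zero) auto
  qed
  then show ?thesis by (rule LIMSEQ_offset)
qed

fun iterQ :: "(complex \<Rightarrow> complex) \<Rightarrow> nat \<Rightarrow> complex \<Rightarrow> complex" where
  "iterQ \<phi> 0 = \<phi>"
| "iterQ \<phi> (Suc n) = (\<lambda>z. if z = 0 then deriv (iterQ \<phi> n) 0 else (iterQ \<phi> n z - iterQ \<phi> n 0) / z)"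

lemma iterQ_holo:
  assumes "\<phi> holomorphic_on S" "open S" "0 \<in> S"
  shows "iterQ \<phi> n holomorphic_on S"
proof (induction n)
  case 0 then show ?case using assms by simp
next
  case (Suc n)
  have "0 \<in> interior S" using assms by (simp add: interior_open)
  then show ?case using pole_lemma[OF Suc, of 0] by (simp only: iterQ.simps diff_zero)
qed

lemma iterQ_step: "iterQ \<phi> n z = iterQ \<phi> n 0 + z * iterQ \<phi> (Suc n) z"
  by (cases "z = 0") (auto simp: field_simps)

lemma iterQ_expand: "\<phi> z = (\<Sum>m<n. iterQ \<phi> m 0 * z ^ m) + z ^ n * iterQ \<phi> n z"
proof (induction n)
  case 0 then show ?case by simp
next
  case (Suc n)
  then show ?case using iterQ_step[of \<phi> n z] by (simp add: algebra_simps)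
qed

lemma iterQ_expand1:
  assumes "\<phi> 0 = 0"
  shows "\<phi> z = (\<Sum>m\<in>{1..K}. iterQ \<phi> m 0 * z ^ m) + z ^ Suc K * iterQ \<phi> (Suc K) z"
proof -
  have "{..<Suc K} = insert 0 {1..K}" by auto
  then have "(\<Sum>m<Suc K. iterQ \<phi> m 0 * z ^ m) = (\<Sum>m\<in>{1..K}. iterQ \<phi> m 0 * z ^ m)"
    using assms by simp
  then show ?thesis using iterQ_expand[of \<phi> z "Suc K"] by simp
qed

lemma bounded_on_Dn:
  assumes hol: "g holomorphic_on Dn (4 * \<eta>)" and \<eta>: "\<eta> > 0"
  obtains M where "\<And>w. w \<in> Dn (2 * \<eta>) \<Longrightarrow> cmod (g w) \<le> M"
proof -
  define C where "C = (\<lambda>(t, w). of_real t + w) ` ({0..1::real} \<times> cball (0::complex) (2 * \<eta>))"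
  have cC: "compact C" unfolding C_def
    by (intro compact_continuous_image continuous_intros compact_Times compact_Icc compact_cball)
      (auto simp: case_prod_unfold intro!: continuous_intros)
  have sub1: "Dn (2 * \<eta>) \<subseteq> C"
  proof
    fix z assume "z \<in> Dn (2 * \<eta>)"
    then obtain t where t: "t \<in> {0..1}" "cmod (z - of_real t) < 2 * \<eta>" by (auto simp: Dn_def)
    then have "(t, z - of_real t) \<in> {0..1} \<times> cball 0 (2 * \<eta>)" by auto
    then show "z \<in> C" unfolding C_def by (rule rev_image_eqI) simp
  qed
  have sub2: "C \<subseteq> Dn (4 * \<eta>)"
  proof
    fix z assume "z \<in> C"
    then obtain a b where ab: "a \<in> {0..1}" "cmod b \<le> 2 * \<eta>" "z = of_real a + b" by (auto simp: C_def)
    then have "cmod (z - of_real a) < 4 * \<eta>" using \<eta> by simp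
    then show "z \<in> Dn (4 * \<eta>)" using ab(1) by (auto simp: Dn_def)
  qed
  have "continuous_on C g"
    using holomorphic_on_imp_continuous_on[OF hol] sub2 by (rule continuous_on_subset)
  then have "compact (g ` C)" using cC by (rule compact_continuous_image)
  then obtain M where "\<forall>y\<in>g ` C. norm y \<le> M" using compact_imp_bounded bounded_iff by metis
  then show ?thesis using sub1 that by blast
qed

lemma series_ext:
  fixes c :: "nat \<Rightarrow> real"
  assumes ser: "\<And>u. \<bar>u - y\<bar> < \<delta> \<Longrightarrow> (\<lambda>k. c k * (u - y) ^ k) sums f u"
  shows "\<And>z. cmod (z - of_real y) < \<delta> \<Longrightarrow> (\<lambda>w. \<Sum>k. of_real (c k) * (w - of_real y) ^ k) field_differentiable at z"
    and "\<And>u. \<bar>u - y\<bar> < \<delta> \<Longrightarrow> (\<Sum>k. of_real (c k) * (of_real u - of_real y) ^ k) = (of_real (f u) :: complex)"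
proof -
  fix z :: complex assume z: "cmod (z - of_real y) < \<delta>"
  define t where "t = (cmod (z - of_real y) + \<delta>) / 2"
  have t: "cmod (z - of_real y) < t" "t < \<delta>" using z by (auto simp: t_def)
  have t0: "0 < t" using t(1) norm_ge_zero[of "z - of_real y"] by linarith
  have "\<bar>(y + t) - y\<bar> < \<delta>" using t t0 by simp
  then have "(\<lambda>k. c k * t ^ k) sums f (y + t)" using ser[of "y + t"] by simp
  then have "summable (\<lambda>k. c k * t ^ k)" by (rule sums_summable)
  then have sm: "summable (\<lambda>k. of_real (c k) * (of_real t :: complex) ^ k)"
    using summable_of_real_iff[where f="\<lambda>k. c k * t ^ k" and 'a=complex] by simp
  have "norm (z - of_real y) < norm (of_real t :: complex)" using t t0 by simp
  then have d: "((\<lambda>w. \<Sum>k. of_real (c k) * w ^ k) has_field_derivative (\<Sum>k. diffs (\<lambda>k. of_real (c k)) k * (z - of_real y) ^ k)) (at (z - of_real y))"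
    by (rule termdiffs_strong[OF sm])
  then have "(\<lambda>w. \<Sum>k. of_real (c k) * w ^ k) field_differentiable at (z - of_real y)"
    using field_differentiable_def by blast
  moreover have "(\<lambda>w. w - of_real y) field_differentiable at z" by (intro derivative_intros)
  ultimately have "((\<lambda>w. \<Sum>k. of_real (c k) * w ^ k) \<circ> (\<lambda>w. w - of_real y)) field_differentiable at z"
    by (intro field_differentiable_compose) auto
  then show "(\<lambda>w. \<Sum>k. of_real (c k) * (w - of_real y) ^ k) field_differentiable at z" by (simp add: o_def)
next
  fix u assume u: "\<bar>u - y\<bar> < \<delta>"
  have "(\<lambda>k. of_real (c k * (u - y) ^ k) :: complex) sums of_real (f u)"
    by (rule sums_of_real[OF ser[OF u]])
  then show "(\<Sum>k. of_real (c k) * (of_real u - of_real y) ^ k) = (of_real (f u) :: complex)"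
    by (simp add: sums_iff)
qed

lemma real_analytic_ext:
  assumes an: "real_analytic_on f {a..b}"
  obtains U F where "open U" "\<And>y. y \<in> {a..b} \<Longrightarrow> of_real y \<in> U" "F holomorphic_on U"
    "\<And>y. y \<in> {a..b} \<Longrightarrow> F (of_real y) = of_real (f y)"
proof -
  have "\<forall>y\<in>{a..b}. \<exists>\<delta>c. fst \<delta>c > 0 \<and> (\<forall>z. \<bar>z - y\<bar> < fst \<delta>c \<longrightarrow> (\<lambda>k. snd \<delta>c k * (z - y) ^ k) sums f z)"
    using an unfolding real_analytic_on_def real_analytic_at_def by fastforce
  then obtain dc where dc: "\<And>y. y \<in> {a..b} \<Longrightarrow> fst (dc y) > 0 \<and> (\<forall>z. \<bar>z - y\<bar> < fst (dc y) \<longrightarrow> (\<lambda>k. snd (dc y) k * (z - y) ^ k) sums f z)"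
    by metis
  define \<delta> where "\<delta> = (\<lambda>y. fst (dc y))"
  define c where "c = (\<lambda>y. snd (dc y))"
  define P where "P = (\<lambda>y w. \<Sum>k. of_real (c y k) * (w - of_real y) ^ k :: complex)"
  have \<delta>pos: "y \<in> {a..b} \<Longrightarrow> \<delta> y > 0" for y using dc by (simp add: \<delta>_def)
  have ser: "y \<in> {a..b} \<Longrightarrow> \<bar>u - y\<bar> < \<delta> y \<Longrightarrow> (\<lambda>k. c y k * (u - y) ^ k) sums f u" for y u
    using dc by (simp add: \<delta>_def c_def)
  have P1: "y \<in> {a..b} \<Longrightarrow> cmod (z - of_real y) < \<delta> y \<Longrightarrow> P y field_differentiable at z" for y z
    unfolding P_def by (rule series_ext(1)[OF ser]) auto
  have P2: "y \<in> {a..b} \<Longrightarrow> \<bar>u - y\<bar> < \<delta> y \<Longrightarrow> P y (of_real u) = of_real (f u)" for y u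
    unfolding P_def by (rule series_ext(2)[OF ser]) auto
  have Phol: "y \<in> {a..b} \<Longrightarrow> P y holomorphic_on ball (of_real y) (\<delta> y)" for y
    using P1 by (auto simp: holomorphic_on_def dist_norm norm_minus_commute intro: field_differentiable_at_within)
  have P3: "P y1 z = P y2 z" if y: "y1 \<in> {a..b}" "y2 \<in> {a..b}"
    and z: "z \<in> ball (of_real y1) (\<delta> y1)" "z \<in> ball (of_real y2) (\<delta> y2)" for y1 y2 z
  proof -
    define W where "W = (ball (of_real y1) (\<delta> y1) \<inter> ball (of_real y2) (\<delta> y2) :: complex set)"
    have oW: "open W" unfolding W_def by auto
    have cW: "connected W" unfolding W_def by (intro convex_connected convex_Int convex_ball)
    have hW: "(\<lambda>w. P y1 w - P y2 w) holomorphic_on W"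
      unfolding W_def by (intro holomorphic_on_diff; rule holomorphic_on_subset[OF Phol]) (use y in auto)
    define p where "p = Re z"
    have Rp: "\<bar>p - yi\<bar> \<le> cmod (z - of_real yi)" for yi
      using abs_Re_le_cmod[of "z - of_real yi"] by (simp add: p_def)
    have pW: "of_real p \<in> W"
      using z Rp[of y1] Rp[of y2] unfolding W_def
      by (auto simp: dist_norm norm_minus_commute simp flip: of_real_diff)
    obtain \<epsilon> where \<epsilon>: "\<epsilon> > 0" "ball (of_real p) \<epsilon> \<subseteq> W" using oW pW open_contains_ball by blast
    define U where "U = (of_real ` {u. \<bar>u - p\<bar> < \<epsilon>} :: complex set)"
    have UW: "U \<subseteq> W"
    proof
      fix w assume "w \<in> U"
      then obtain u where "w = of_real u" "\<bar>u - p\<bar> < \<epsilon>" by (auto simp: U_def)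
      then show "w \<in> W" using \<epsilon> by (auto simp: dist_norm abs_minus_commute simp flip: of_real_diff)
    qed
    have U0: "P y1 w - P y2 w = 0" if "w \<in> U" for w
    proof -
      obtain u where u: "w = of_real u" using \<open>w \<in> U\<close> by (auto simp: U_def)
      have "of_real u \<in> W" using UW that u by auto
      then have "\<bar>u - y1\<bar> < \<delta> y1" "\<bar>u - y2\<bar> < \<delta> y2"
        unfolding W_def by (auto simp: dist_norm simp flip: of_real_diff)
      then show ?thesis using P2[OF y(1)] P2[OF y(2)] u by simp
    qed
    have lim: "of_real p islimpt U"
    proof (rule islimpt_approachable[THEN iffD2], intro allI impI)
      fix e :: real assume e: "e > 0"
      define d where "d = min e \<epsilon> / 2"
      have d: "0 < d" "d < e" "d < \<epsilon>" using e \<epsilon> by (auto simp: d_def)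
      have "of_real (p + d) \<in> U" unfolding U_def by (rule imageI) (use d in simp)
      moreover have "of_real (p + d) \<noteq> (of_real p :: complex)" using d by simp
      moreover have "dist (of_real (p + d)) (of_real p :: complex) < e" using d by (simp add: dist_norm)
      ultimately show "\<exists>x'\<in>U. x' \<noteq> of_real p \<and> dist x' (of_real p) < e" by blast
    qed
    have "z \<in> W" using z by (simp add: W_def)
    have "P y1 z - P y2 z = 0"
      by (rule analytic_continuation[OF hW oW cW UW pW lim U0 \<open>z \<in> W\<close>])
    then show ?thesis by simp
  qed
  define U where "U = ((\<Union>y\<in>{a..b}. ball (of_real y) (\<delta> y)) :: complex set)"
  define F where "F = (\<lambda>z. P (SOME y. y \<in> {a..b} \<and> z \<in> ball (of_real y) (\<delta> y)) z)"
  have FP: "F z = P y z" if "y \<in> {a..b}" "z \<in> ball (of_real y) (\<delta> y)" for y z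
  proof -
    define y' where "y' = (SOME y. y \<in> {a..b} \<and> z \<in> ball (of_real y) (\<delta> y))"
    have "y' \<in> {a..b} \<and> z \<in> ball (of_real y') (\<delta> y')" unfolding y'_def by (rule someI) (use that in blast)
    then show ?thesis using P3[of y' y z] that by (simp add: F_def y'_def)
  qed
  have "open U" unfolding U_def by auto
  moreover have "of_real y \<in> U" if "y \<in> {a..b}" for y using that \<delta>pos[OF that] unfolding U_def by force
  moreover have "F holomorphic_on U"
    unfolding U_def
  proof (rule holomorphic_on_UN_open)
    fix y assume y: "y \<in> {a..b}"
    show "F holomorphic_on ball (of_real y) (\<delta> y)"
      by (rule holomorphic_transform[OF Phol[OF y]]) (use FP[OF y] in auto)
  qed auto
  moreover have "F (of_real y) = of_real (f y)" if "y \<in> {a..b}" for y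
    using FP[OF that, of "of_real y"] P2[OF that, of y] \<delta>pos[OF that] by simp
  ultimately show ?thesis using that by blast
qed

lemma xt_in: assumes "t \<in> {0..1::real}" shows "x * t \<in> {min 0 x..max 0 x}"
proof (cases "x \<ge> 0")
  case True
  have "0 \<le> x * t" using True assms by simp
  moreover have "x * t \<le> x * 1" using True assms by (intro mult_left_mono) auto
  ultimately show ?thesis using True by simp
next
  case False
  have "x * t \<le> 0" using False assms by (simp add: mult_nonpos_nonneg)
  moreover have "x * 1 \<le> x * t" using False assms by (intro mult_left_mono_neg) auto
  ultimately show ?thesis using False by simp
qed

lemma zero_in_Dn: "e > 0 \<Longrightarrow> 0 \<in> Dn e"
  unfolding Dn_def by (rule CollectI, rule bexI[of _ 0]) auto

lemma ofreal_in_Dn: "e > 0 \<Longrightarrow> t \<in> {0..1} \<Longrightarrow> of_real t \<in> Dn e"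
  unfolding Dn_def by (rule CollectI, rule bexI[of _ t]) auto

lemma ext_log:
  assumes an: "real_analytic_on f {min 0 x..max 0 x}" and nz: "\<forall>y\<in>{min 0 x..max 0 x}. f y \<noteq> 0"
    and f0: "f 0 = 1"
  obtains \<eta> \<phi> where "\<eta> > 0" "\<phi> holomorphic_on Dn (4 * \<eta>)" "\<phi> 0 = 0"
    "\<And>t. t \<in> {0..1} \<Longrightarrow> f (x * t) > 0 \<and> Re (\<phi> (of_real t)) = ln (f (x * t))"
proof -
  obtain U F where U: "open U" "\<And>y. y \<in> {min 0 x..max 0 x} \<Longrightarrow> of_real y \<in> U" and
    Fh: "F holomorphic_on U" and Ff: "\<And>y. y \<in> {min 0 x..max 0 x} \<Longrightarrow> F (of_real y) = of_real (f y)"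
    using real_analytic_ext[OF an] by blast
  define G where "G = (\<lambda>z. F (of_real x * z))"
  define U' where "U' = (\<lambda>z. of_real x * z) -` U"
  have oU': "open U'"
    using continuous_open_preimage[of UNIV "\<lambda>z. of_real x * z" U] U(1) unfolding U'_def
    by (auto intro!: continuous_intros)
  have Gh: "G holomorphic_on U'"
  proof -
    have "(\<lambda>z. of_real x * z) holomorphic_on U'" by (intro holomorphic_intros)
    moreover have "(\<lambda>z. of_real x * z) ` U' \<subseteq> U" by (auto simp: U'_def)
    ultimately show ?thesis unfolding G_def using holomorphic_on_compose_gen[OF _ Fh] by (auto simp: o_def)
  qed
  define V where "V = U' \<inter> G -` (- {0})"
  have oV: "open V" unfolding V_def
    by (rule continuous_open_preimage[OF holomorphic_on_imp_continuous_on[OF Gh] oU']) auto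
  have Gt: "G (of_real t) = of_real (f (x * t))" if "t \<in> {0..1}" for t
    using Ff[OF xt_in[OF that]] by (simp add: G_def)
  have CV: "of_real ` {0..1} \<subseteq> V"
  proof
    fix z assume "z \<in> (of_real ` {0..1} :: complex set)"
    then obtain t where t: "t \<in> {0..1}" "z = of_real t" by auto
    have "of_real x * z \<in> U" using U(2)[OF xt_in[OF t(1)]] t by simp
    moreover have "G z \<noteq> 0" using Gt[OF t(1)] nz xt_in[OF t(1)] t by simp
    ultimately show "z \<in> V" by (simp add: V_def U'_def)
  qed
  have cC: "compact (of_real ` {0..1} :: complex set)"
    by (intro compact_continuous_image continuous_intros compact_Icc)
  obtain \<epsilon> where \<epsilon>: "\<epsilon> > 0" "(\<Union>z\<in>of_real ` {0..1}. ball z \<epsilon>) \<subseteq> V"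
    using compact_subset_open_imp_ball_epsilon_subset[OF cC oV CV] by blast
  define \<eta> where "\<eta> = \<epsilon> / 4"
  have \<eta>: "\<eta> > 0" using \<epsilon> by (simp add: \<eta>_def)
  have DV: "Dn (4 * \<eta>) \<subseteq> V" using \<epsilon>(2) unfolding Dn_UN \<eta>_def by auto
  have GhD: "G holomorphic_on Dn (4 * \<eta>)" using Gh DV holomorphic_on_subset unfolding V_def by blast
  have GnzD: "z \<in> Dn (4 * \<eta>) \<Longrightarrow> G z \<noteq> 0" for z using DV unfolding V_def by auto
  have z0: "0 \<in> Dn (4 * \<eta>)" using \<eta> by (intro zero_in_Dn) simp
  obtain g where gh: "g holomorphic_on Dn (4 * \<eta>)" and ge: "\<And>z. z \<in> Dn (4 * \<eta>) \<Longrightarrow> exp (g z) = G z"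
    using holomorphic_logarithm_exists[OF convex_Dn open_Dn GhD GnzD z0] by blast
  define \<phi> where "\<phi> = (\<lambda>z. g z - g 0)"
  have G0: "G 0 = 1" using Gt[of 0] f0 by simp
  have \<phi>h: "\<phi> holomorphic_on Dn (4 * \<eta>)" unfolding \<phi>_def by (intro holomorphic_intros gh)
  have \<phi>0: "\<phi> 0 = 0" by (simp add: \<phi>_def)
  have \<phi>e: "exp (\<phi> z) = G z" if "z \<in> Dn (4 * \<eta>)" for z
    using ge[OF that] ge[OF z0] G0 by (simp add: \<phi>_def exp_diff)
  have contG: "continuous_on {0..1} (\<lambda>t. Re (G (of_real t)))"
  proof -
    have "continuous_on (Dn (4 * \<eta>)) G" using GhD by (rule holomorphic_on_imp_continuous_on)
    moreover have "of_real ` {0..1} \<subseteq> Dn (4 * \<eta>)" using ofreal_in_Dn \<eta> by auto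
    ultimately have "continuous_on {0..1} (G \<circ> of_real)"
      by (intro continuous_on_compose continuous_intros) (auto elim: continuous_on_subset)
    then show ?thesis by (intro continuous_intros) (simp add: o_def)
  qed
  have pos: "f (x * t) > 0" if t: "t \<in> {0..1}" for t
  proof (rule ccontr)
    assume "\<not> f (x * t) > 0"
    then have "Re (G (of_real t)) \<le> 0" using Gt[OF t] by simp
    moreover have "0 \<le> Re (G (of_real 0))" using G0 by simp
    ultimately obtain s where s: "0 \<le> s" "s \<le> t" "Re (G (of_real s)) = 0"
      using IVT2'[of "\<lambda>t. Re (G (of_real t))" t 0 0] t contG continuous_on_subset[of "{0..1}" _ "{0..t}"]
      by auto
    then have "s \<in> {0..1}" using t by auto
    then show False using s(3) Gt nz xt_in by fastforce
  qed
  have "Re (\<phi> (of_real t)) = ln (f (x * t))" if t: "t \<in> {0..1}" for t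
  proof -
    have "exp (\<phi> (of_real t)) = of_real (f (x * t))" using \<phi>e[OF ofreal_in_Dn[OF _ t]] Gt[OF t] \<eta> by simp
    then have "exp (Re (\<phi> (of_real t))) = f (x * t)"
      using pos[OF t] by (metis norm_exp_eq_Re norm_of_real abs_of_pos)
    then show ?thesis by (metis ln_exp)
  qed
  then show ?thesis using that[OF \<eta> \<phi>h \<phi>0] pos by blast
qed

lemma xn_eq:
  assumes r: "r > 1" and S: "finite S"
  shows "xn S r x (i + card S) = x * (BS r S / r ^ i)"
proof -
  have "BS r S = (\<Prod>k\<in>S. (r ^ k - 1) powr (1 / real k)) / r ^ card S"
    unfolding BS_def bk_def by (simp add: prod_dividef)
  then show ?thesis unfolding xn_def using r by (simp add: power_add field_simps)
qed

lemma Pf_eq: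
  assumes r: "r > 1" and S: "finite S" "S \<noteq> {}" "0 \<notin> S"
    and ray: "ray \<phi> 1 C"
    and fl: "\<And>t. t \<in> {0..1} \<Longrightarrow> f (x * t) > 0 \<and> Re (\<phi> (of_real t)) = ln (f (x * t))"
  shows "convergent_prod (\<lambda>i. f (xn S r x (i + card S)) ^ ((i + card S - 1) choose (card S - 1)))"
    and "Pf f S r x = exp (Re (Qs r \<phi> S 1))"
proof -
  obtain t where t: "card S = Suc t" using S by (metis card_0_eq not0_implies_Suc)
  define B where "B = BS r S"
  have B: "0 < B" "B \<le> 1" using BS_pos BS_le1 r S by (auto simp: B_def)
  define tt where "tt = (\<lambda>i::nat. B / r ^ i)"
  have tt: "tt i \<in> {0..1}" "0 < tt i" for i using cj_bounds[OF r B, of i] by (auto simp: tt_def)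
  define a where "a = (\<lambda>i. real ((i + t) choose t) * ln (f (x * tt i)))"
  have u: "f (xn S r x (i + card S)) ^ ((i + card S - 1) choose (card S - 1)) = exp (a i)" for i
  proof -
    have fp: "f (x * tt i) > 0" using fl[OF tt(1)] by blast
    have "f (xn S r x (i + card S)) ^ ((i + card S - 1) choose (card S - 1)) = f (x * tt i) ^ ((i + t) choose t)"
      using xn_eq[OF r S(1)] t by (simp add: tt_def B_def)
    also have "\<dots> = exp (a i)" unfolding a_def using fp by (simp add: exp_of_nat_mult[symmetric] ln_realpow[symmetric])
    finally show ?thesis .
  qed
  have sn: "summable (\<lambda>i. real ((i + t) choose t) * norm (\<phi> (1 * of_real (B / r ^ i))))"
    by (rule ray_summable[OF ray r B])
  have Qeq: "Qs r \<phi> S 1 = (\<Sum>i. of_nat ((i + t) choose t) * \<phi> (of_real (tt i)))"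
    using S(2) t by (simp add: Qs_def B_def tt_def)
  have scs: "summable (\<lambda>i. of_nat ((i + t) choose t) * \<phi> (of_real (tt i)))"
    by (rule summable_norm_cancel) (use sn in \<open>simp add: norm_mult tt_def\<close>)
  have ae: "a i = Re (of_nat ((i + t) choose t) * \<phi> (of_real (tt i)))" for i
    using fl[OF tt(1)[of i]] by (simp add: a_def)
  have sa: "summable a"
  proof (rule summable_comparison_test'[OF sn])
    fix i
    have "norm (a i) \<le> real ((i + t) choose t) * cmod (\<phi> (of_real (tt i)))"
      unfolding ae using abs_Re_le_cmod[of "\<phi> (of_real (tt i))"] by (simp add: abs_mult mult_left_mono)
    then show "norm (a i) \<le> real ((i + t) choose t) * norm (\<phi> (1 * of_real (B / r ^ i)))"
      by (simp add: tt_def)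
  qed
  show "convergent_prod (\<lambda>i. f (xn S r x (i + card S)) ^ ((i + card S - 1) choose (card S - 1)))"
    unfolding u by (rule convergent_prod_exp[OF sa])
  have "Pf f S r x = exp (suminf a)"
    unfolding Pf_def u by (rule prodinf_exp[OF sa])
  also have "suminf a = Re (Qs r \<phi> S 1)"
    unfolding Qeq Re_suminf[OF scs] ae by simp
  finally show "Pf f S r x = exp (Re (Qs r \<phi> S 1))" .
qed

lemma ratio_eq:
  assumes r: "r > 1" and ray: "ray \<phi> 1 C"
    and fl: "\<And>t. t \<in> {0..1} \<Longrightarrow> f (x * t) > 0 \<and> Re (\<phi> (of_real t)) = ln (f (x * t))"
  shows "ratioN f N r x = exp (Re (\<phi> 1) - Re (Hs r N \<phi> 1))"
proof -
  define Od where "Od = {S. S \<subseteq> {1..N} \<and> S \<noteq> {} \<and> odd (card S)}"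
  define Ev where "Ev = {S. S \<subseteq> {1..N} \<and> S \<noteq> {} \<and> even (card S)}"
  have fin: "finite Od" "finite Ev" unfolding Od_def Ev_def
    by (auto intro: finite_subset[of _ "Pow {1..N}"])
  have Pf_S: "Pf f S r x = exp (Re (Qs r \<phi> S 1))" if "S \<in> Od \<union> Ev" for S
  proof -
    have "finite S" "S \<noteq> {}" "0 \<notin> S" using that finite_subset[of S "{1..N}"] by (auto simp: Od_def Ev_def)
    then show ?thesis by (rule Pf_eq(2)[OF r _ _ _ ray fl])
  qed
  have num: "(\<Prod>S\<in>Od. Pf f S r x) = exp (\<Sum>S\<in>Od. Re (Qs r \<phi> S 1))"
    using Pf_S by (simp add: exp_sum[OF fin(1)])
  have den: "(\<Prod>S\<in>Ev. Pf f S r x) = exp (\<Sum>S\<in>Ev. Re (Qs r \<phi> S 1))"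
    using Pf_S by (simp add: exp_sum[OF fin(2)])
  have "ratioN f N r x = exp ((\<Sum>S\<in>Od. Re (Qs r \<phi> S 1)) - (\<Sum>S\<in>Ev. Re (Qs r \<phi> S 1)))"
    unfolding ratioN_def Od_def[symmetric] Ev_def[symmetric] num den by (simp add: exp_diff)
  also have "(\<Sum>S\<in>Od. Re (Qs r \<phi> S 1)) - (\<Sum>S\<in>Ev. Re (Qs r \<phi> S 1)) = Re (\<phi> 1) - Re (Hs r N \<phi> 1)"
  proof -
    have P: "Pow {1..N} = insert {} (Od \<union> Ev)" by (auto simp: Od_def Ev_def)
    have ne: "{} \<notin> Od \<union> Ev" by (auto simp: Od_def Ev_def)
    have dj: "Od \<inter> Ev = {}" by (auto simp: Od_def Ev_def)
    have "Re (Hs r N \<phi> 1) = (\<Sum>S\<in>Pow {1..N}. (-1) ^ card S * Re (Qs r \<phi> S 1))"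
      unfolding Hs_def Re_sum
    proof (intro sum.cong refl)
      fix S :: "nat set"
      show "Re ((-1) ^ card S * Qs r \<phi> S 1) = (-1) ^ card S * Re (Qs r \<phi> S 1)"
        by (cases "even (card S)") simp_all
    qed
    also have "\<dots> = Re (\<phi> 1) + ((\<Sum>S\<in>Od. (-1) ^ card S * Re (Qs r \<phi> S 1)) + (\<Sum>S\<in>Ev. (-1) ^ card S * Re (Qs r \<phi> S 1)))"
      unfolding P using fin ne dj by (simp add: sum.union_disjoint Qs_def)
    also have "(\<Sum>S\<in>Od. (-1) ^ card S * Re (Qs r \<phi> S 1)) = - (\<Sum>S\<in>Od. Re (Qs r \<phi> S 1))"
      by (simp add: Od_def sum_negf[symmetric])
    also have "(\<Sum>S\<in>Ev. (-1) ^ card S * Re (Qs r \<phi> S 1)) = (\<Sum>S\<in>Ev. Re (Qs r \<phi> S 1))"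
      by (simp add: Ev_def)
    finally show ?thesis by simp
  qed
  finally show ?thesis .
qed

theorem theorem1:
  fixes f :: "real \<Rightarrow> real" and x :: real
  assumes "real_analytic_on f {min 0 x..max 0 x}"
    and "\<forall>y\<in>{min 0 x..max 0 x}. f y \<noteq> 0"
    and "f 0 = 1"
  shows "(\<forall>\<^sub>F r in at_right 1. \<forall>S. finite S \<and> S \<noteq> {} \<and> 0 \<notin> S \<longrightarrow>
            convergent_prod (\<lambda>i. f (xn S r x (i + card S)) ^ ((i + card S - 1) choose (card S - 1))))
       \<and> (\<exists>R :: real \<Rightarrow> real.
            (\<forall>\<^sub>F r in at_right 1. (\<lambda>N. ratioN f N r x) \<longlonglongrightarrow> R r)
            \<and> (R \<longlongrightarrow> f x) (at_right 1))"
proof -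
  obtain \<eta> \<phi> where \<eta>: "\<eta> > 0" and \<phi>h: "\<phi> holomorphic_on Dn (4 * \<eta>)" and \<phi>0: "\<phi> 0 = 0"
    and fl: "\<And>t. t \<in> {0..1} \<Longrightarrow> f (x * t) > 0 \<and> Re (\<phi> (of_real t)) = ln (f (x * t))"
    using ext_log[OF assms] by blast
  have z0: "0 \<in> Dn (4 * \<eta>)" using \<eta> by (intro zero_in_Dn) simp
  have one2: "1 \<in> Dn (2 * \<eta>)" using \<eta> by (intro one_in_Dn) simp
  have sub: "Dn (2 * \<eta>) \<subseteq> Dn (4 * \<eta>)" using \<eta> by (intro Dn_mono) simp
  have holK: "iterQ \<phi> (Suc K) holomorphic_on Dn (4 * \<eta>)" for K
    by (rule iterQ_holo[OF \<phi>h open_Dn z0])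
  have bndK: "\<exists>M. \<forall>w\<in>Dn (2 * \<eta>). cmod (iterQ \<phi> (Suc K) w) \<le> M" for K
    using bounded_on_Dn[OF holK \<eta>] by metis
  have expK: "\<And>z. z \<in> Dn (2 * \<eta>) \<Longrightarrow> \<phi> z = (\<Sum>m\<in>{1..K}. iterQ \<phi> m 0 * z ^ m) + z ^ Suc K * iterQ \<phi> (Suc K) z" for K
    by (rule iterQ_expand1[where \<phi>=\<phi>, OF \<phi>0])
  obtain M0 where M0: "\<And>w. w \<in> Dn (2 * \<eta>) \<Longrightarrow> cmod (iterQ \<phi> (Suc 0) w) \<le> M0" using bndK[of 0] by blast
  obtain C where ray: "ray \<phi> 1 C"
    using ray_phi[where K=0 and \<psi>="iterQ \<phi> (Suc 0)" and M=M0 and a="\<lambda>m. iterQ \<phi> m 0", OF dil_Dn M0 expK one2]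
    by blast
  have per_r: "(\<forall>S. finite S \<and> S \<noteq> {} \<and> 0 \<notin> S \<longrightarrow>
            convergent_prod (\<lambda>i. f (xn S r x (i + card S)) ^ ((i + card S - 1) choose (card S - 1))))
         \<and> (\<lambda>N. ratioN f N r x) \<longlonglongrightarrow> f x" if r: "r > 1" for r
  proof (intro conjI allI impI)
    fix S :: "nat set" assume "finite S \<and> S \<noteq> {} \<and> 0 \<notin> S"
    then show "convergent_prod (\<lambda>i. f (xn S r x (i + card S)) ^ ((i + card S - 1) choose (card S - 1)))"
      using Pf_eq(1)[OF r _ _ _ ray fl] by blast
  next
    obtain n where n: "4 < r ^ n" using real_arch_pow[OF r] by blast
    have K: "4 \<le> r ^ Suc n" using n r by (simp add: less_imp_le order_trans[OF _ mult_right_mono[of 1 r]])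
    obtain M where M: "\<And>w. w \<in> Dn (2 * \<eta>) \<Longrightarrow> cmod (iterQ \<phi> (Suc n) w) \<le> M" using bndK[of n] by blast
    have hol2: "iterQ \<phi> (Suc n) holomorphic_on Dn (2 * \<eta>)" using holK sub holomorphic_on_subset by blast
    have lim: "(\<lambda>N. Psi r n (iterQ \<phi> (Suc n)) N 1) \<longlonglongrightarrow> 0"
      by (rule Psi_tendsto[OF r K \<eta> hol2 M])
    have HP: "Hs r N \<phi> 1 = Psi r n (iterQ \<phi> (Suc n)) N 1" if "N \<ge> n" for N
    proof -
      have "Hs r N \<phi> 1 = (\<Sum>m\<in>{1..n}. iterQ \<phi> m 0 * of_real (Lam r N m) * 1 ^ m) + 1 ^ Suc n * Psi r n (iterQ \<phi> (Suc n)) N 1"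
        by (rule Hs_decomp[where D="Dn (2 * \<eta>)", OF dil_Dn M r expK one2])
      moreover have "(\<Sum>m\<in>{1..n}. iterQ \<phi> m 0 * of_real (Lam r N m) * 1 ^ m) = 0"
        using Lam_zero[OF r] that by (intro sum.neutral) auto
      ultimately show ?thesis by simp
    qed
    have limH: "(\<lambda>N. Re (Hs r N \<phi> 1)) \<longlonglongrightarrow> 0"
    proof -
      have "(\<lambda>N. Re (Psi r n (iterQ \<phi> (Suc n)) N 1)) \<longlonglongrightarrow> Re 0" by (rule tendsto_Re[OF lim])
      then have "(\<lambda>N. Re (Psi r n (iterQ \<phi> (Suc n)) N 1)) \<longlonglongrightarrow> 0" by simp
      moreover have "\<forall>\<^sub>F N in sequentially. Re (Psi r n (iterQ \<phi> (Suc n)) N 1) = Re (Hs r N \<phi> 1)"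
        by (rule eventually_sequentiallyI[of n]) (simp only: HP)
      ultimately show ?thesis by (rule Lim_transform_eventually)
    qed
    have "(\<lambda>N. exp (Re (\<phi> 1) - Re (Hs r N \<phi> 1))) \<longlonglongrightarrow> exp (Re (\<phi> 1) - 0)"
      by (intro tendsto_intros limH)
    moreover have "exp (Re (\<phi> 1) - 0) = f x" using fl[of 1] by simp
    ultimately show "(\<lambda>N. ratioN f N r x) \<longlonglongrightarrow> f x"
      using ratio_eq[OF r ray fl] by simp
  qed
  show ?thesis
  proof (intro conjI exI[of _ "\<lambda>r. f x"])
    show "\<forall>\<^sub>F r in at_right 1. \<forall>S. finite S \<and> S \<noteq> {} \<and> 0 \<notin> S \<longrightarrow>
            convergent_prod (\<lambda>i. f (xn S r x (i + card S)) ^ ((i + card S - 1) choose (card S - 1)))"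
      using eventually_at_right_less[of "1::real"] by eventually_elim (use per_r in blast)
    show "\<forall>\<^sub>F r in at_right 1. (\<lambda>N. ratioN f N r x) \<longlonglongrightarrow> f x"
      using eventually_at_right_less[of "1::real"] by eventually_elim (use per_r in blast)
    show "((\<lambda>r. f x) \<longlongrightarrow> f x) (at_right 1)" by simp
  qed
qed

end
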